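(* Let $\mathcal G$ be a groupoid, $x\in\mathcal G(i_0,k_0)$, $y\in\mathcal G(j_0,k_0)$ and $z\in\mathcal G(l_0,k_0)$. Then for every object $A$ of $\mathcal H^r(\mathcal G)$, $$\zeta^{y,z}_A\circ(\mathrm{id}_{z\bar y}\diamond\zeta^{x,y}_A)=\zeta^{x,z}_A\circ(m_{z\bar y,y\bar x}\diamond\mathrm{id}_{A^x}):H_{z\bar y}\diamond H_{y\bar x}\diamond A^x\to A^z .$$ In particular, for every $i\in\mathrm{Obj}\,\mathcal G$, $\zeta^{1_i,1_i}_{H_{1_i}}:H_{1_i}\diamond H_{1_i}\to H_{1_i}$ makes $H_{1_i}$ into a (left) module over the algebra $(H_{1_i},m_{1_i,1_i},\eta_i)$.
   Context: Groupoid conventions: a groupoid $\mathcal G$ is a small category in which every morphism is invertible; $\mathcal G(i,j)$ denotes the morphisms from $i$ to $j$; composition left to right ($g\in\mathcal G(i,j)$, $h\in\mathcal G(j,k)$ give $gh\in\mathcal G(i,k)$); $1_i$ identity, $\bar g$ inverse. For $x\in\mathcal G(i,k)$ the functor $(\cdot)^x:\mathcal G\to\mathcal G$: $k^x=i$, $j^x=j$ for $j\neq k$; $g^x=xg\bar x$ if $g\in\mathcal G(k,k)$, $g^x=xg$ if $g\in\mathcal G(k,l)$, $l\neq k$, $g^x=g\bar x$ if $g\in\mathcal G(j,k)$, $j\neq k$, $g^x=g$ otherwise; on objects $(H_{g_1}\diamond\dots\diamond H_{g_r})^x=H_{g_1^x}\diamond\dots\diamond H_{g_r^x}$, $\mathbf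 1^x=\mathbf 1$. Braided monoidal categories: product $\diamond$, unit $\mathbf 1$, braiding $\gamma_{A,B}$, $\bar\gamma_{A,B}:=\gamma_{B,A}^{-1}$; constraints suppressed; $\mathrm{id}_g=\mathrm{id}_{H_g}$, $\gamma_{g,h}=\gamma_{H_g,H_h}$, $\bar\gamma_{g,h}=\bar\gamma_{H_g,H_h}$. $\mathcal H^r(\mathcal G)$ is the braided monoidal category freely generated by objects $H_g$ ($g\in\mathcal G$) and morphisms $\Delta_g:H_g\to H_g\diamond H_g$, $\epsilon_g:H_g\to\mathbf 1$, $m_{g,h}:H_g\diamond H_h\to H_{gh}$, $\eta_i:\mathbf 1\to H_{1_i}$, $S_g,\bar S_g:H_g\to H_{\bar g}$, $l_i:H_{1_i}\to\mathbf 1$, $L_g:\mathbf 1\to H_g$, $v_g,v_g^{-1}:H_g\to H_g$, subject to (composable labels, $g\in\mathcal G(i,j)$): (Hopf) $\Delta$ coassociative; $(\epsilon_g\diamond\mathrm{id})\Delta_g=\mathrm{id}_g=(\mathrm{id}\diamond\epsilon_g)\Delta_g$; $m$ associative; $m_{g,1_j}(\mathrm{id}_g\diamond\eta_j)=\mathrm{id}_g=m_{1_i,g}(\eta_i\diamond\mathrm{id}_g)$; $(m_{g,h}\diamond m_{g,h})(\mathrm{id}_g\diamond\gamma_{g,h}\diamond\mathrm{id}_h)(\Delta_g\diamond\Delta_h)=\Delta_{gh}m_{g,h}$; $\epsilon_{gh}m_{g,h}=\epsilon_g\diamond\epsilon_h$; $\Delta_{1_i}\eta_i=\eta_i\diamond\eta_i$;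 $\epsilon_{1_i}\eta_i=\mathrm{id}_{\mathbf 1}$; $m_{\bar g,g}(S_g\diamond\mathrm{id}_g)\Delta_g=\eta_j\epsilon_g$; $m_{g,\bar g}(\mathrm{id}_g\diamond S_g)\Delta_g=\eta_i\epsilon_g$; $S_{\bar g}\bar S_g=\bar S_{\bar g}S_g=\mathrm{id}_g$. (Integrals) $(\mathrm{id}_{1_i}\diamond l_i)\Delta_{1_i}=\eta_il_i$; $m_{g,h}(L_g\diamond\mathrm{id}_h)=L_{gh}\epsilon_h$; $l_iL_{1_i}=\mathrm{id}_{\mathbf 1}=l_iS_{1_i}L_{1_i}$; $S_gL_g=L_{\bar g}$; $l_iS_{1_i}=l_i$. (Ribbon) $v_gv_g^{-1}=v_g^{-1}v_g=\mathrm{id}_g$; $\epsilon_gv_g=\epsilon_g$; $v_gL_g=L_g$; $S_gv_g=v_{\bar g}S_g$; $m_{g,h}(v_g\diamond\mathrm{id}_h)=v_{gh}m_{g,h}=m_{g,h}(\mathrm{id}_g\diamond v_h)$. Copairings $\sigma_{i,i}=(v_{1_i}^{-1}\diamond(v_{1_i}^{-1}S_{1_i}))\Delta_{1_i}v_{1_i}\eta_i$, $\sigma_{i,j}=\eta_i\diamond\eta_j$ ($i\neq j$). For $g\in\mathcal G(p,q)$, $h\in\mathcal G(r,s)$, $k\in\mathrm{Obj}\,\mathcal G$: $\mu_{g,h}=(m_{g,1_q}\diamond m_{1_r,h})(\mathrm{id}_g\diamond\sigma_{q,r}\diamond\mathrm{id}_h)$, $\rho^r_{g,k}=(m_{g,1_q}\diamond\mathrm{id}_{1_k})(\mathrm{id}_g\diamond\sigma_{q,k})$,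 $\rho^l_{g,k}=(\mathrm{id}_{1_k}\diamond m_{1_p,g})(\sigma_{k,p}\diamond\mathrm{id}_g)$. Required: each $\sigma_{i,j}$ is a Hopf copairing ($(\Delta_{1_i}\diamond\mathrm{id})\sigma_{i,j}=(\mathrm{id}\diamond\mathrm{id}\diamond m_{1_j,1_j})(\mathrm{id}\diamond\sigma_{i,j}\diamond\mathrm{id})\sigma_{i,j}$, $(\mathrm{id}\diamond\Delta_{1_j})\sigma_{i,j}=(m_{1_i,1_i}\diamond\mathrm{id}\diamond\mathrm{id})(\mathrm{id}\diamond\sigma_{i,j}\diamond\mathrm{id})\sigma_{i,j}$, $(\epsilon_{1_i}\diamond\mathrm{id})\sigma_{i,j}=\eta_j$, $(\mathrm{id}\diamond\epsilon_{1_j})\sigma_{i,j}=\eta_i$); $\Delta_gv_g^{-1}=\mu_{g,g}(v_g^{-1}\diamond v_g^{-1})\bar\gamma_{g,g}\Delta_g$; for $g\in\mathcal G(p,i)$, $h\in\mathcal G(j,s)$: $(m_{1_j,h}\diamond m_{g,1_i})(S_{1_j}\diamond(\mu_{h,g}\bar\gamma_{g,h}\mu_{g,h})\diamond S_{1_i})(\rho^l_{g,j}\diamond\rho^r_{h,i})=\gamma_{g,h}$. The morphisms $\zeta$: for $x\in\mathcal G(i_0,k_0)$, $y\in\mathcal G(j_0,k_0)$ and $g\in\mathcal G(i,j)$, $\zeta^{x,y}_g:H_{y\bar x}\diamond H_{g^x}\to H_{g^y}$ is: $\epsilon_{y\bar x}\diamond\mathrm{id}_{g^x}$ if $i\neq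 k_0\neq j$; $m_{y\bar x,g^x}$ if $i=k_0\neq j$; $m_{g^x,x\bar y}(\mathrm{id}_{g^x}\diamond S_{y\bar x})\gamma_{y\bar x,g^x}$ if $i\neq k_0=j$; $m_{y\bar x,g^xx\bar y}(\mathrm{id}_{y\bar x}\diamond m_{g^x,x\bar y})(\mathrm{id}_{y\bar x}\diamond((\mathrm{id}_{g^x}\diamond S_{y\bar x})\gamma_{y\bar x,g^x}))(\Delta_{y\bar x}\diamond\mathrm{id}_{g^x})$ if $i=k_0=j$. Extended to all objects by $\zeta^{x,y}_{\mathbf 1}=\epsilon_{y\bar x}$ and $\zeta^{x,y}_{A\diamond H_g}=(\zeta^{x,y}_A\diamond\zeta^{x,y}_g)(\mathrm{id}_{y\bar x}\diamond\gamma_{y\bar x,A^x}\diamond\mathrm{id}_{g^x})(\Delta_{y\bar x}\diamond\mathrm{id}_{A^x\diamond H_{g^x}})$, giving $\zeta^{x,y}_A:H_{y\bar x}\diamond A^x\to A^y$. *)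

theory Defs
  imports Main
begin

text \<open>A (small) groupoid: objects, morphisms, source, target, composition written
left to right (g in G(i,j), h in G(j,k) give gcmp g h in G(i,k)), identities, inverses.\<close>

record ('o, 'a) grpd =
  gOb  :: "'o set"
  gAr  :: "'a set"
  gsrc :: "'a \<Rightarrow> 'o"
  gtgt :: "'a \<Rightarrow> 'o"
  gcmp :: "'a \<Rightarrow> 'a \<Rightarrow> 'a"
  gid  :: "'o \<Rightarrow> 'a"
  ginv :: "'a \<Rightarrow> 'a"

definition groupoid :: "('o, 'a) grpd \<Rightarrow> bool" where
  "groupoid G \<longleftrightarrow>
     (\<forall>f\<in>gAr G. gsrc G f \<in> gOb G \<and> gtgt G f \<in> gOb G) \<and>
     (\<forall>f\<in>gAr G. \<forall>g\<in>gAr G. gtgt G f = gsrc G g \<longrightarrow>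
        gcmp G f g \<in> gAr G \<and> gsrc G (gcmp G f g) = gsrc G f \<and> gtgt G (gcmp G f g) = gtgt G g) \<and>
     (\<forall>f\<in>gAr G. \<forall>g\<in>gAr G. \<forall>h\<in>gAr G. gtgt G f = gsrc G g \<longrightarrow> gtgt G g = gsrc G h \<longrightarrow>
        gcmp G (gcmp G f g) h = gcmp G f (gcmp G g h)) \<and>
     (\<forall>i\<in>gOb G. gid G i \<in> gAr G \<and> gsrc G (gid G i) = i \<and> gtgt G (gid G i) = i) \<and>
     (\<forall>f\<in>gAr G. gcmp G (gid G (gsrc G f)) f = f \<and> gcmp G f (gid G (gtgt G f)) = f) \<and>
     (\<forall>f\<in>gAr G. ginv G f \<in> gAr G \<and> gsrc G (ginv G f) = gtgt G f \<and> gtgt G (ginv G f) = gsrc G f \<and>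
        gcmp G f (ginv G f) = gid G (gsrc G f) \<and> gcmp G (ginv G f) f = gid G (gtgt G f))"

text \<open>Objects of H^r(G) are words H_{g1} \<diamond> ... \<diamond> H_{gr}, represented as lists of
morphisms of G (the empty list is the unit object 1); associativity and unit constraints
are suppressed (strict model, justified by coherence).  Morphism terms:
Comp f g is f \<circ> g (g first), Tens is \<diamond>, Br w v = gamma_{w,v} : w@v \<rightarrow> v@w,
BrI w v = its inverse : v@w \<rightarrow> w@v; the remaining constructors are the generators
Delta, epsilon, m, eta, S, Sbar, l, L, v, v^{-1}.\<close>

datatype ('o, 'a) hm =
    Id "'a list"
  | Comp "('o, 'a) hm" "('o, 'a) hm"
  | Tens "('o, 'a) hm" "('o, 'a) hm"
  | Br "'a list" "'a list"
  | BrI "'a list" "'a list"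
  | Dl 'a
  | Ep 'a
  | Mu 'a 'a
  | Et 'o
  | An 'a
  | AnB 'a
  | Li 'o
  | Lc 'a
  | Rv 'a
  | RvI 'a

fun hdom :: "('o, 'a) grpd \<Rightarrow> ('o, 'a) hm \<Rightarrow> 'a list"
and hcod :: "('o, 'a) grpd \<Rightarrow> ('o, 'a) hm \<Rightarrow> 'a list" where
  "hdom G (Id w) = w"
| "hdom G (Comp f g) = hdom G g"
| "hdom G (Tens f g) = hdom G f @ hdom G g"
| "hdom G (Br w v) = w @ v"
| "hdom G (BrI w v) = v @ w"
| "hdom G (Dl g) = [g]"
| "hdom G (Ep g) = [g]"
| "hdom G (Mu g h) = [g, h]"
| "hdom G (Et i) = []"
| "hdom G (An g) = [g]"
| "hdom G (AnB g) = [g]"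
| "hdom G (Li i) = [gid G i]"
| "hdom G (Lc g) = []"
| "hdom G (Rv g) = [g]"
| "hdom G (RvI g) = [g]"
| "hcod G (Id w) = w"
| "hcod G (Comp f g) = hcod G f"
| "hcod G (Tens f g) = hcod G f @ hcod G g"
| "hcod G (Br w v) = v @ w"
| "hcod G (BrI w v) = w @ v"
| "hcod G (Dl g) = [g, g]"
| "hcod G (Ep g) = []"
| "hcod G (Mu g h) = [gcmp G g h]"
| "hcod G (Et i) = [gid G i]"
| "hcod G (An g) = [ginv G g]"
| "hcod G (AnB g) = [ginv G g]"
| "hcod G (Li i) = []"
| "hcod G (Lc g) = [g]"
| "hcod G (Rv g) = [g]"
| "hcod G (RvI g) = [g]"

fun hwf :: "('o, 'a) grpd \<Rightarrow> ('o, 'a) hm \<Rightarrow> bool" where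
  "hwf G (Id w) = (set w \<subseteq> gAr G)"
| "hwf G (Comp f g) = (hwf G f \<and> hwf G g \<and> hdom G f = hcod G g)"
| "hwf G (Tens f g) = (hwf G f \<and> hwf G g)"
| "hwf G (Br w v) = (set w \<subseteq> gAr G \<and> set v \<subseteq> gAr G)"
| "hwf G (BrI w v) = (set w \<subseteq> gAr G \<and> set v \<subseteq> gAr G)"
| "hwf G (Dl g) = (g \<in> gAr G)"
| "hwf G (Ep g) = (g \<in> gAr G)"
| "hwf G (Mu g h) = (g \<in> gAr G \<and> h \<in> gAr G \<and> gtgt G g = gsrc G h)"
| "hwf G (Et i) = (i \<in> gOb G)"
| "hwf G (An g) = (g \<in> gAr G)"
| "hwf G (AnB g) = (g \<in> gAr G)"
| "hwf G (Li i) = (i \<in> gOb G)"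
| "hwf G (Lc g) = (g \<in> gAr G)"
| "hwf G (Rv g) = (g \<in> gAr G)"
| "hwf G (RvI g) = (g \<in> gAr G)"

definition sigma :: "('o, 'a) grpd \<Rightarrow> 'o \<Rightarrow> 'o \<Rightarrow> ('o, 'a) hm" where
  "sigma G i j = (if i = j then
      Comp (Tens (RvI (gid G i)) (Comp (RvI (gid G i)) (An (gid G i))))
           (Comp (Dl (gid G i)) (Comp (Rv (gid G i)) (Et i)))
    else Tens (Et i) (Et j))"

definition hmu :: "('o, 'a) grpd \<Rightarrow> 'a \<Rightarrow> 'a \<Rightarrow> ('o, 'a) hm" where
  "hmu G g h = Comp (Tens (Mu g (gid G (gtgt G g))) (Mu (gid G (gsrc G h)) h))
                    (Tens (Tens (Id [g]) (sigma G (gtgt G g) (gsrc G h))) (Id [h]))"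

definition rhor :: "('o, 'a) grpd \<Rightarrow> 'a \<Rightarrow> 'o \<Rightarrow> ('o, 'a) hm" where
  "rhor G g k = Comp (Tens (Mu g (gid G (gtgt G g))) (Id [gid G k]))
                     (Tens (Id [g]) (sigma G (gtgt G g) k))"

definition rhol :: "('o, 'a) grpd \<Rightarrow> 'a \<Rightarrow> 'o \<Rightarrow> ('o, 'a) hm" where
  "rhol G g k = Comp (Tens (Id [gid G k]) (Mu (gid G (gsrc G g)) g))
                     (Tens (sigma G k (gsrc G g)) (Id [g]))"

inductive heq :: "('o, 'a) grpd \<Rightarrow> ('o, 'a) hm \<Rightarrow> ('o, 'a) hm \<Rightarrow> bool" for G where
  refl: "hwf G f \<Longrightarrow> heq G f f"
| sym: "heq G f g \<Longrightarrow> heq G g f"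
| trans: "heq G f g \<Longrightarrow> heq G g h \<Longrightarrow> heq G f h"
| comp_cong: "heq G f f' \<Longrightarrow> heq G g g' \<Longrightarrow> hdom G f = hcod G g \<Longrightarrow> heq G (Comp f g) (Comp f' g')"
| tens_cong: "heq G f f' \<Longrightarrow> heq G g g' \<Longrightarrow> heq G (Tens f g) (Tens f' g')"
| comp_assoc: "hwf G f \<Longrightarrow> hwf G g \<Longrightarrow> hwf G h \<Longrightarrow> hdom G f = hcod G g \<Longrightarrow> hdom G g = hcod G h \<Longrightarrow>
     heq G (Comp (Comp f g) h) (Comp f (Comp g h))"
| comp_idl: "hwf G f \<Longrightarrow> heq G (Comp (Id (hcod G f)) f) f"
| comp_idr: "hwf G f \<Longrightarrow> heq G (Comp f (Id (hdom G f))) f"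
| tens_assoc: "hwf G f \<Longrightarrow> hwf G g \<Longrightarrow> hwf G h \<Longrightarrow> heq G (Tens (Tens f g) h) (Tens f (Tens g h))"
| tens_unitl: "hwf G f \<Longrightarrow> heq G (Tens (Id []) f) f"
| tens_unitr: "hwf G f \<Longrightarrow> heq G (Tens f (Id [])) f"
| tens_id: "set w \<subseteq> gAr G \<Longrightarrow> set v \<subseteq> gAr G \<Longrightarrow> heq G (Tens (Id w) (Id v)) (Id (w @ v))"
| interchange: "hwf G f \<Longrightarrow> hwf G f' \<Longrightarrow> hwf G g \<Longrightarrow> hwf G g' \<Longrightarrow>
     hdom G f = hcod G f' \<Longrightarrow> hdom G g = hcod G g' \<Longrightarrow>
     heq G (Tens (Comp f f') (Comp g g')) (Comp (Tens f g) (Tens f' g'))"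
| br_inv1: "set w \<subseteq> gAr G \<Longrightarrow> set v \<subseteq> gAr G \<Longrightarrow> heq G (Comp (Br w v) (BrI w v)) (Id (v @ w))"
| br_inv2: "set w \<subseteq> gAr G \<Longrightarrow> set v \<subseteq> gAr G \<Longrightarrow> heq G (Comp (BrI w v) (Br w v)) (Id (w @ v))"
| br_nat: "hwf G f \<Longrightarrow> hwf G g \<Longrightarrow>
     heq G (Comp (Br (hcod G f) (hcod G g)) (Tens f g)) (Comp (Tens g f) (Br (hdom G f) (hdom G g)))"
| hex1: "set w \<subseteq> gAr G \<Longrightarrow> set u \<subseteq> gAr G \<Longrightarrow> set v \<subseteq> gAr G \<Longrightarrow>
     heq G (Br w (u @ v)) (Comp (Tens (Id u) (Br w v)) (Tens (Br w u) (Id v)))"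
| hex2: "set w \<subseteq> gAr G \<Longrightarrow> set u \<subseteq> gAr G \<Longrightarrow> set v \<subseteq> gAr G \<Longrightarrow>
     heq G (Br (w @ u) v) (Comp (Tens (Br w v) (Id u)) (Tens (Id w) (Br u v)))"
| coassoc: "g \<in> gAr G \<Longrightarrow>
     heq G (Comp (Tens (Dl g) (Id [g])) (Dl g)) (Comp (Tens (Id [g]) (Dl g)) (Dl g))"
| counitl: "g \<in> gAr G \<Longrightarrow> heq G (Comp (Tens (Ep g) (Id [g])) (Dl g)) (Id [g])"
| counitr: "g \<in> gAr G \<Longrightarrow> heq G (Comp (Tens (Id [g]) (Ep g)) (Dl g)) (Id [g])"
| massoc: "g \<in> gAr G \<Longrightarrow> h \<in> gAr G \<Longrightarrow> k \<in> gAr G \<Longrightarrow> gtgt G g = gsrc G h \<Longrightarrow> gtgt G h = gsrc G k \<Longrightarrow>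
     heq G (Comp (Mu (gcmp G g h) k) (Tens (Mu g h) (Id [k])))
           (Comp (Mu g (gcmp G h k)) (Tens (Id [g]) (Mu h k)))"
| unitr: "g \<in> gAr G \<Longrightarrow> heq G (Comp (Mu g (gid G (gtgt G g))) (Tens (Id [g]) (Et (gtgt G g)))) (Id [g])"
| unitl: "g \<in> gAr G \<Longrightarrow> heq G (Comp (Mu (gid G (gsrc G g)) g) (Tens (Et (gsrc G g)) (Id [g]))) (Id [g])"
| bialg: "g \<in> gAr G \<Longrightarrow> h \<in> gAr G \<Longrightarrow> gtgt G g = gsrc G h \<Longrightarrow>
     heq G (Comp (Tens (Mu g h) (Mu g h))
                 (Comp (Tens (Tens (Id [g]) (Br [g] [h])) (Id [h])) (Tens (Dl g) (Dl h))))
           (Comp (Dl (gcmp G g h)) (Mu g h))"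
| counit_mult: "g \<in> gAr G \<Longrightarrow> h \<in> gAr G \<Longrightarrow> gtgt G g = gsrc G h \<Longrightarrow>
     heq G (Comp (Ep (gcmp G g h)) (Mu g h)) (Tens (Ep g) (Ep h))"
| delta_unit: "i \<in> gOb G \<Longrightarrow> heq G (Comp (Dl (gid G i)) (Et i)) (Tens (Et i) (Et i))"
| counit_unit: "i \<in> gOb G \<Longrightarrow> heq G (Comp (Ep (gid G i)) (Et i)) (Id [])"
| antipodel: "g \<in> gAr G \<Longrightarrow>
     heq G (Comp (Mu (ginv G g) g) (Comp (Tens (An g) (Id [g])) (Dl g))) (Comp (Et (gtgt G g)) (Ep g))"
| antipoder: "g \<in> gAr G \<Longrightarrow>
     heq G (Comp (Mu g (ginv G g)) (Comp (Tens (Id [g]) (An g)) (Dl g))) (Comp (Et (gsrc G g)) (Ep g))"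
| antipode_inv1: "g \<in> gAr G \<Longrightarrow> heq G (Comp (An (ginv G g)) (AnB g)) (Id [g])"
| antipode_inv2: "g \<in> gAr G \<Longrightarrow> heq G (Comp (AnB (ginv G g)) (An g)) (Id [g])"
| int_right: "i \<in> gOb G \<Longrightarrow>
     heq G (Comp (Tens (Id [gid G i]) (Li i)) (Dl (gid G i))) (Comp (Et i) (Li i))"
| coint_left: "g \<in> gAr G \<Longrightarrow> h \<in> gAr G \<Longrightarrow> gtgt G g = gsrc G h \<Longrightarrow>
     heq G (Comp (Mu g h) (Tens (Lc g) (Id [h]))) (Comp (Lc (gcmp G g h)) (Ep h))"
| int_norm1: "i \<in> gOb G \<Longrightarrow> heq G (Comp (Li i) (Lc (gid G i))) (Id [])"
| int_norm2: "i \<in> gOb G \<Longrightarrow> heq G (Comp (Li i) (Comp (An (gid G i)) (Lc (gid G i)))) (Id [])"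
| coint_S: "g \<in> gAr G \<Longrightarrow> heq G (Comp (An g) (Lc g)) (Lc (ginv G g))"
| int_S: "i \<in> gOb G \<Longrightarrow> heq G (Comp (Li i) (An (gid G i))) (Li i)"
| v_inv1: "g \<in> gAr G \<Longrightarrow> heq G (Comp (Rv g) (RvI g)) (Id [g])"
| v_inv2: "g \<in> gAr G \<Longrightarrow> heq G (Comp (RvI g) (Rv g)) (Id [g])"
| v_counit: "g \<in> gAr G \<Longrightarrow> heq G (Comp (Ep g) (Rv g)) (Ep g)"
| v_coint: "g \<in> gAr G \<Longrightarrow> heq G (Comp (Rv g) (Lc g)) (Lc g)"
| v_S: "g \<in> gAr G \<Longrightarrow> heq G (Comp (An g) (Rv g)) (Comp (Rv (ginv G g)) (An g))"
| v_mult1: "g \<in> gAr G \<Longrightarrow> h \<in> gAr G \<Longrightarrow> gtgt G g = gsrc G h \<Longrightarrow>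
     heq G (Comp (Mu g h) (Tens (Rv g) (Id [h]))) (Comp (Rv (gcmp G g h)) (Mu g h))"
| v_mult2: "g \<in> gAr G \<Longrightarrow> h \<in> gAr G \<Longrightarrow> gtgt G g = gsrc G h \<Longrightarrow>
     heq G (Comp (Rv (gcmp G g h)) (Mu g h)) (Comp (Mu g h) (Tens (Id [g]) (Rv h)))"
| copair1: "i \<in> gOb G \<Longrightarrow> j \<in> gOb G \<Longrightarrow>
     heq G (Comp (Tens (Dl (gid G i)) (Id [gid G j])) (sigma G i j))
           (Comp (Tens (Id [gid G i, gid G i]) (Mu (gid G j) (gid G j)))
                 (Comp (Tens (Tens (Id [gid G i]) (sigma G i j)) (Id [gid G j])) (sigma G i j)))"
| copair2: "i \<in> gOb G \<Longrightarrow> j \<in> gOb G \<Longrightarrow>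
     heq G (Comp (Tens (Id [gid G i]) (Dl (gid G j))) (sigma G i j))
           (Comp (Tens (Mu (gid G i) (gid G i)) (Id [gid G j, gid G j]))
                 (Comp (Tens (Tens (Id [gid G i]) (sigma G i j)) (Id [gid G j])) (sigma G i j)))"
| copair3: "i \<in> gOb G \<Longrightarrow> j \<in> gOb G \<Longrightarrow>
     heq G (Comp (Tens (Ep (gid G i)) (Id [gid G j])) (sigma G i j)) (Et j)"
| copair4: "i \<in> gOb G \<Longrightarrow> j \<in> gOb G \<Longrightarrow>
     heq G (Comp (Tens (Id [gid G i]) (Ep (gid G j))) (sigma G i j)) (Et i)"
| delta_vinv: "g \<in> gAr G \<Longrightarrow>
     heq G (Comp (Dl g) (RvI g))
           (Comp (hmu G g g) (Comp (Tens (RvI g) (RvI g)) (Comp (BrI [g] [g]) (Dl g))))"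
| braid_rel: "g \<in> gAr G \<Longrightarrow> h \<in> gAr G \<Longrightarrow>
     heq G (Comp (Tens (Mu (gid G (gsrc G h)) h) (Mu g (gid G (gtgt G g))))
                 (Comp (Tens (Tens (An (gid G (gsrc G h)))
                                   (Comp (hmu G h g) (Comp (BrI [h] [g]) (hmu G g h))))
                             (An (gid G (gtgt G g))))
                       (Tens (rhol G g (gsrc G h)) (rhor G h (gtgt G g)))))
           (Br [g] [h])"

definition gconj :: "('o, 'a) grpd \<Rightarrow> 'a \<Rightarrow> 'a \<Rightarrow> 'a" where
  "gconj G x g = (let k = gtgt G x in
     if gsrc G g = k \<and> gtgt G g = k then gcmp G (gcmp G x g) (ginv G x)
     else if gsrc G g = k then gcmp G x g
     else if gtgt G g = k then gcmp G g (ginv G x)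
     else g)"

definition wconj :: "('o, 'a) grpd \<Rightarrow> 'a \<Rightarrow> 'a list \<Rightarrow> 'a list" where
  "wconj G x A = map (gconj G x) A"

text \<open>zeta^{x,y}_g : H_{y xbar} \<diamond> H_{g^x} \<rightarrow> H_{g^y}, for x in G(i0,k0), y in G(j0,k0).\<close>
definition zeta1 :: "('o, 'a) grpd \<Rightarrow> 'a \<Rightarrow> 'a \<Rightarrow> 'a \<Rightarrow> ('o, 'a) hm" where
  "zeta1 G x y g = (let k0 = gtgt G x; u = gcmp G y (ginv G x); gx = gconj G x g;
                       w = gcmp G x (ginv G y) in
     if gsrc G g \<noteq> k0 \<and> gtgt G g \<noteq> k0 then Tens (Ep u) (Id [gx])
     else if gsrc G g = k0 \<and> gtgt G g \<noteq> k0 then Mu u gx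
     else if gsrc G g \<noteq> k0 \<and> gtgt G g = k0 then
       Comp (Mu gx w) (Comp (Tens (Id [gx]) (An u)) (Br [u] [gx]))
     else
       Comp (Mu u (gcmp G gx w))
        (Comp (Tens (Id [u]) (Mu gx w))
         (Comp (Tens (Id [u]) (Comp (Tens (Id [gx]) (An u)) (Br [u] [gx])))
               (Tens (Dl u) (Id [gx])))))"

text \<open>Extension to all objects; the argument is the reversed word, so that
g # ra stands for A \<diamond> H_g with A = rev ra.\<close>
fun zetaR :: "('o, 'a) grpd \<Rightarrow> 'a \<Rightarrow> 'a \<Rightarrow> 'a list \<Rightarrow> ('o, 'a) hm" where
  "zetaR G x y [] = Ep (gcmp G y (ginv G x))"
| "zetaR G x y [g] = zeta1 G x y g"
| "zetaR G x y (g # h # ra) =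
     (let u = gcmp G y (ginv G x); Ax = wconj G x (rev (h # ra)) in
      Comp (Tens (zetaR G x y (h # ra)) (zeta1 G x y g))
       (Comp (Tens (Tens (Id [u]) (Br [u] Ax)) (Id [gconj G x g]))
             (Tens (Dl u) (Id (Ax @ [gconj G x g])))))"

definition zeta :: "('o, 'a) grpd \<Rightarrow> 'a \<Rightarrow> 'a \<Rightarrow> 'a list \<Rightarrow> ('o, 'a) hm" where
  "zeta G x y A = zetaR G x y (rev A)"

end

theory Submission
  imports Defs
begin

locale gpd = fixes G :: "('o,'a) grpd" assumes grp: "groupoid G"
begin

lemma src_cmp[simp]: "f \<in> gAr G \<Longrightarrow> g \<in> gAr G \<Longrightarrow> gtgt G f = gsrc G g \<Longrightarrow> gsrc G (gcmp G f g) = gsrc G f"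
  using grp unfolding groupoid_def by blast
lemma tgt_cmp[simp]: "f \<in> gAr G \<Longrightarrow> g \<in> gAr G \<Longrightarrow> gtgt G f = gsrc G g \<Longrightarrow> gtgt G (gcmp G f g) = gtgt G g"
  using grp unfolding groupoid_def by blast
lemma cmp_ar[simp]: "f \<in> gAr G \<Longrightarrow> g \<in> gAr G \<Longrightarrow> gtgt G f = gsrc G g \<Longrightarrow> gcmp G f g \<in> gAr G"
  using grp unfolding groupoid_def by blast
lemma cmp_assoc: "f \<in> gAr G \<Longrightarrow> g \<in> gAr G \<Longrightarrow> h \<in> gAr G \<Longrightarrow> gtgt G f = gsrc G g \<Longrightarrow> gtgt G g = gsrc G h \<Longrightarrow>
   gcmp G (gcmp G f g) h = gcmp G f (gcmp G g h)"
  using grp unfolding groupoid_def by blast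
lemma id_ar[simp]: "i \<in> gOb G \<Longrightarrow> gid G i \<in> gAr G" using grp unfolding groupoid_def by blast
lemma src_id[simp]: "i \<in> gOb G \<Longrightarrow> gsrc G (gid G i) = i" using grp unfolding groupoid_def by blast
lemma tgt_id[simp]: "i \<in> gOb G \<Longrightarrow> gtgt G (gid G i) = i" using grp unfolding groupoid_def by blast
lemma src_ob[simp]: "f \<in> gAr G \<Longrightarrow> gsrc G f \<in> gOb G" using grp unfolding groupoid_def by blast
lemma tgt_ob[simp]: "f \<in> gAr G \<Longrightarrow> gtgt G f \<in> gOb G" using grp unfolding groupoid_def by blast
lemma idl[simp]: "f \<in> gAr G \<Longrightarrow> gcmp G (gid G (gsrc G f)) f = f" using grp unfolding groupoid_def by blast
lemma idr[simp]: "f \<in> gAr G \<Longrightarrow> gcmp G f (gid G (gtgt G f)) = f" using grp unfolding groupoid_def by blast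
lemma inv_ar[simp]: "f \<in> gAr G \<Longrightarrow> ginv G f \<in> gAr G" using grp unfolding groupoid_def by blast
lemma src_inv[simp]: "f \<in> gAr G \<Longrightarrow> gsrc G (ginv G f) = gtgt G f" using grp unfolding groupoid_def by blast
lemma tgt_inv[simp]: "f \<in> gAr G \<Longrightarrow> gtgt G (ginv G f) = gsrc G f" using grp unfolding groupoid_def by blast
lemma invr[simp]: "f \<in> gAr G \<Longrightarrow> gcmp G f (ginv G f) = gid G (gsrc G f)" using grp unfolding groupoid_def by blast
lemma invl[simp]: "f \<in> gAr G \<Longrightarrow> gcmp G (ginv G f) f = gid G (gtgt G f)" using grp unfolding groupoid_def by blast

lemma idl'[simp]: "f \<in> gAr G \<Longrightarrow> gsrc G f = i \<Longrightarrow> gcmp G (gid G i) f = f" by auto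
lemma idr'[simp]: "f \<in> gAr G \<Longrightarrow> gtgt G f = i \<Longrightarrow> gcmp G f (gid G i) = f" by auto

lemma inv_unique: assumes "f \<in> gAr G" "g \<in> gAr G" "gtgt G f = gsrc G g" "gcmp G f g = gid G (gsrc G f)"
  shows "g = ginv G f"
proof -
  have "g = gcmp G (gid G (gtgt G f)) g" using assms by simp
  also have "\<dots> = gcmp G (gcmp G (ginv G f) f) g" using assms by simp
  also have "\<dots> = gcmp G (ginv G f) (gcmp G f g)" using assms by (intro cmp_assoc) auto
  also have "\<dots> = ginv G f" using assms by simp
  finally show ?thesis .
qed

lemma inv_inv[simp]: "f \<in> gAr G \<Longrightarrow> ginv G (ginv G f) = f"
  by (metis inv_ar inv_unique invl src_inv tgt_inv)
lemma inv_id[simp]: "i \<in> gOb G \<Longrightarrow> ginv G (gid G i) = gid G i"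
  by (metis id_ar idl' inv_unique src_id tgt_id)
lemma inv_cmp[simp]: assumes "f \<in> gAr G" "g \<in> gAr G" "gtgt G f = gsrc G g"
  shows "ginv G (gcmp G f g) = gcmp G (ginv G g) (ginv G f)"
proof -
  have "gcmp G (gcmp G f g) (gcmp G (ginv G g) (ginv G f)) = gcmp G f (gcmp G (gcmp G g (ginv G g)) (ginv G f))"
  proof -
    have "gcmp G (gcmp G f g) (gcmp G (ginv G g) (ginv G f)) = gcmp G f (gcmp G g (gcmp G (ginv G g) (ginv G f)))"
      using assms by (intro cmp_assoc) auto
    also have "gcmp G g (gcmp G (ginv G g) (ginv G f)) = gcmp G (gcmp G g (ginv G g)) (ginv G f)"
      using assms by (intro cmp_assoc[symmetric]) auto
    finally show ?thesis .
  qed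
  also have "\<dots> = gcmp G f (ginv G f)" using assms by simp
  also have "\<dots> = gid G (gsrc G f)" using assms by simp
  finally show ?thesis using assms by (intro inv_unique[symmetric]) auto
qed

lemma hwf_set: "hwf G f \<Longrightarrow> set (hdom G f) \<subseteq> gAr G \<and> set (hcod G f) \<subseteq> gAr G"
  by (induction f) auto

lemma hwf_dom_ar: "hwf G f \<Longrightarrow> x \<in> set (hdom G f) \<Longrightarrow> x \<in> gAr G" using hwf_set by blast
lemma hwf_cod_ar: "hwf G f \<Longrightarrow> x \<in> set (hcod G f) \<Longrightarrow> x \<in> gAr G" using hwf_set by blast

lemma heq_wf: "heq G f g \<Longrightarrow> hwf G f \<and> hwf G g \<and> hdom G f = hdom G g \<and> hcod G f = hcod G g"
proof (induction rule: heq.induct)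
  case (refl f) then show ?case by blast
next
  case (sym f g) then show ?case by metis
next
  case (trans f g h) then show ?case by metis
next
  case (comp_cong f f' g g') then show ?case by (metis hwf.simps(2) hdom.simps(2) hcod.simps(2))
next
  case (tens_cong f f' g g') then show ?case by (metis hwf.simps(3) hdom.simps(3) hcod.simps(3))
next
  case comp_assoc then show ?case by (simp add: cmp_assoc hwf_dom_ar hwf_cod_ar subset_iff sigma_def hmu_def rhol_def rhor_def)
next
  case comp_idl then show ?case by (simp add: cmp_assoc hwf_dom_ar hwf_cod_ar subset_iff sigma_def hmu_def rhol_def rhor_def)
next
  case comp_idr then show ?case by (simp add: cmp_assoc hwf_dom_ar hwf_cod_ar subset_iff sigma_def hmu_def rhol_def rhor_def)
next
  case tens_assoc then show ?case by (simp add: cmp_assoc hwf_dom_ar hwf_cod_ar subset_iff sigma_def hmu_def rhol_def rhor_def)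
next
  case tens_unitl then show ?case by (simp add: cmp_assoc hwf_dom_ar hwf_cod_ar subset_iff sigma_def hmu_def rhol_def rhor_def)
next
  case tens_unitr then show ?case by (simp add: cmp_assoc hwf_dom_ar hwf_cod_ar subset_iff sigma_def hmu_def rhol_def rhor_def)
next
  case tens_id then show ?case by (simp add: cmp_assoc hwf_dom_ar hwf_cod_ar subset_iff sigma_def hmu_def rhol_def rhor_def)
next
  case interchange then show ?case by (simp add: cmp_assoc hwf_dom_ar hwf_cod_ar subset_iff sigma_def hmu_def rhol_def rhor_def)
next
  case br_inv1 then show ?case by (simp add: cmp_assoc hwf_dom_ar hwf_cod_ar subset_iff sigma_def hmu_def rhol_def rhor_def)
next
  case br_inv2 then show ?case by (simp add: cmp_assoc hwf_dom_ar hwf_cod_ar subset_iff sigma_def hmu_def rhol_def rhor_def)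
next
  case br_nat then show ?case by (simp add: cmp_assoc hwf_dom_ar hwf_cod_ar subset_iff sigma_def hmu_def rhol_def rhor_def)
next
  case hex1 then show ?case by (simp add: cmp_assoc hwf_dom_ar hwf_cod_ar subset_iff sigma_def hmu_def rhol_def rhor_def)
next
  case hex2 then show ?case by (simp add: cmp_assoc hwf_dom_ar hwf_cod_ar subset_iff sigma_def hmu_def rhol_def rhor_def)
next
  case coassoc then show ?case by (simp add: cmp_assoc hwf_dom_ar hwf_cod_ar subset_iff sigma_def hmu_def rhol_def rhor_def)
next
  case counitl then show ?case by (simp add: cmp_assoc hwf_dom_ar hwf_cod_ar subset_iff sigma_def hmu_def rhol_def rhor_def)
next
  case counitr then show ?case by (simp add: cmp_assoc hwf_dom_ar hwf_cod_ar subset_iff sigma_def hmu_def rhol_def rhor_def)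
next
  case massoc then show ?case by (simp add: cmp_assoc hwf_dom_ar hwf_cod_ar subset_iff sigma_def hmu_def rhol_def rhor_def)
next
  case unitr then show ?case by (simp add: cmp_assoc hwf_dom_ar hwf_cod_ar subset_iff sigma_def hmu_def rhol_def rhor_def)
next
  case unitl then show ?case by (simp add: cmp_assoc hwf_dom_ar hwf_cod_ar subset_iff sigma_def hmu_def rhol_def rhor_def)
next
  case bialg then show ?case by (simp add: cmp_assoc hwf_dom_ar hwf_cod_ar subset_iff sigma_def hmu_def rhol_def rhor_def)
next
  case counit_mult then show ?case by (simp add: cmp_assoc hwf_dom_ar hwf_cod_ar subset_iff sigma_def hmu_def rhol_def rhor_def)
next
  case delta_unit then show ?case by (simp add: cmp_assoc hwf_dom_ar hwf_cod_ar subset_iff sigma_def hmu_def rhol_def rhor_def)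
next
  case counit_unit then show ?case by (simp add: cmp_assoc hwf_dom_ar hwf_cod_ar subset_iff sigma_def hmu_def rhol_def rhor_def)
next
  case antipodel then show ?case by (simp add: cmp_assoc hwf_dom_ar hwf_cod_ar subset_iff sigma_def hmu_def rhol_def rhor_def)
next
  case antipoder then show ?case by (simp add: cmp_assoc hwf_dom_ar hwf_cod_ar subset_iff sigma_def hmu_def rhol_def rhor_def)
next
  case antipode_inv1 then show ?case by (simp add: cmp_assoc hwf_dom_ar hwf_cod_ar subset_iff sigma_def hmu_def rhol_def rhor_def)
next
  case antipode_inv2 then show ?case by (simp add: cmp_assoc hwf_dom_ar hwf_cod_ar subset_iff sigma_def hmu_def rhol_def rhor_def)
next
  case int_right then show ?case by (simp add: cmp_assoc hwf_dom_ar hwf_cod_ar subset_iff sigma_def hmu_def rhol_def rhor_def)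
next
  case coint_left then show ?case by (simp add: cmp_assoc hwf_dom_ar hwf_cod_ar subset_iff sigma_def hmu_def rhol_def rhor_def)
next
  case int_norm1 then show ?case by (simp add: cmp_assoc hwf_dom_ar hwf_cod_ar subset_iff sigma_def hmu_def rhol_def rhor_def)
next
  case int_norm2 then show ?case by (simp add: cmp_assoc hwf_dom_ar hwf_cod_ar subset_iff sigma_def hmu_def rhol_def rhor_def)
next
  case coint_S then show ?case by (simp add: cmp_assoc hwf_dom_ar hwf_cod_ar subset_iff sigma_def hmu_def rhol_def rhor_def)
next
  case int_S then show ?case by (simp add: cmp_assoc hwf_dom_ar hwf_cod_ar subset_iff sigma_def hmu_def rhol_def rhor_def)
next
  case v_S then show ?case by (simp add: cmp_assoc hwf_dom_ar hwf_cod_ar subset_iff sigma_def hmu_def rhol_def rhor_def)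
next
  case v_inv1 then show ?case by (simp add: cmp_assoc hwf_dom_ar hwf_cod_ar subset_iff sigma_def hmu_def rhol_def rhor_def)
next
  case v_inv2 then show ?case by (simp add: cmp_assoc hwf_dom_ar hwf_cod_ar subset_iff sigma_def hmu_def rhol_def rhor_def)
next
  case v_counit then show ?case by (simp add: cmp_assoc hwf_dom_ar hwf_cod_ar subset_iff sigma_def hmu_def rhol_def rhor_def)
next
  case v_coint then show ?case by (simp add: cmp_assoc hwf_dom_ar hwf_cod_ar subset_iff sigma_def hmu_def rhol_def rhor_def)
next
  case v_mult1 then show ?case by (simp add: cmp_assoc hwf_dom_ar hwf_cod_ar subset_iff sigma_def hmu_def rhol_def rhor_def)
next
  case v_mult2 then show ?case by (simp add: cmp_assoc hwf_dom_ar hwf_cod_ar subset_iff sigma_def hmu_def rhol_def rhor_def)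
next
  case copair1 then show ?case by (simp add: cmp_assoc hwf_dom_ar hwf_cod_ar subset_iff sigma_def hmu_def rhol_def rhor_def)
next
  case copair2 then show ?case by (simp add: cmp_assoc hwf_dom_ar hwf_cod_ar subset_iff sigma_def hmu_def rhol_def rhor_def)
next
  case copair3 then show ?case by (simp add: cmp_assoc hwf_dom_ar hwf_cod_ar subset_iff sigma_def hmu_def rhol_def rhor_def)
next
  case copair4 then show ?case by (simp add: cmp_assoc hwf_dom_ar hwf_cod_ar subset_iff sigma_def hmu_def rhol_def rhor_def)
next
  case delta_vinv then show ?case by (simp add: cmp_assoc hwf_dom_ar hwf_cod_ar subset_iff sigma_def hmu_def rhol_def rhor_def)
next
  case braid_rel then show ?case by (simp add: cmp_assoc hwf_dom_ar hwf_cod_ar subset_iff sigma_def hmu_def rhol_def rhor_def)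
qed

end

context gpd begin

definition cl :: "('o,'a) hm \<Rightarrow> ('o,'a) hm set" where "cl f = {g. heq G f g}"
definition ok :: "('o,'a) hm set \<Rightarrow> bool" where "ok C \<longleftrightarrow> (\<exists>f. hwf G f \<and> C = cl f)"
definition rep :: "('o,'a) hm set \<Rightarrow> ('o,'a) hm" where "rep C = (SOME f. f \<in> C)"
definition cdom where "cdom C = hdom G (rep C)"
definition ccod where "ccod C = hcod G (rep C)"
definition cc :: "('o,'a) hm set \<Rightarrow> ('o,'a) hm set \<Rightarrow> ('o,'a) hm set" (infixr "\<odot>" 55) where
  "C \<odot> D = (if ok C \<and> ok D \<and> cdom C = ccod D then cl (Comp (rep C) (rep D)) else {})"
definition ct :: "('o,'a) hm set \<Rightarrow> ('o,'a) hm set \<Rightarrow> ('o,'a) hm set" (infixr "\<otimes>" 65) where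
  "C \<otimes> D = (if ok C \<and> ok D then cl (Tens (rep C) (rep D)) else {})"
definition U where "U C \<longleftrightarrow> ok C \<or> C = {}"

lemma heq_cl: "heq G f g \<Longrightarrow> cl f = cl g"
  unfolding cl_def by (auto intro: heq.trans heq.sym)
lemma cl_empty: "\<not> hwf G f \<Longrightarrow> cl f = {}"
  unfolding cl_def using heq_wf by blast
lemma in_cl: "hwf G f \<Longrightarrow> f \<in> cl f" unfolding cl_def by (simp add: heq.refl)
lemma ok_cl[simp]: "ok (cl f) \<longleftrightarrow> hwf G f"
  unfolding ok_def by (metis cl_empty empty_iff in_cl)
lemma ok_ne: "ok C \<Longrightarrow> C \<noteq> {}" unfolding ok_def using in_cl by blast
lemma not_ok_empty[simp]: "\<not> ok {}" using ok_ne by blast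
lemma rep_in: "ok C \<Longrightarrow> rep C \<in> C" unfolding rep_def by (metis ok_ne some_in_eq)
lemma ok_rep: "ok C \<Longrightarrow> hwf G (rep C) \<and> C = cl (rep C)"
proof -
  assume "ok C" then obtain f where f: "hwf G f" "C = cl f" unfolding ok_def by blast
  then have "heq G f (rep C)" using rep_in[OF \<open>ok C\<close>] unfolding cl_def by simp
  then show ?thesis using f heq_cl heq_wf by metis
qed
lemma cdom_cl[simp]: "hwf G f \<Longrightarrow> cdom (cl f) = hdom G f"
  unfolding cdom_def by (metis cl_def heq_wf mem_Collect_eq ok_cl rep_in)
lemma ccod_cl[simp]: "hwf G f \<Longrightarrow> ccod (cl f) = hcod G f"
  unfolding ccod_def by (metis cl_def heq_wf mem_Collect_eq ok_cl rep_in)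

lemma rep_cl: "hwf G f \<Longrightarrow> heq G f (rep (cl f))"
proof -
  assume "hwf G f" then have "rep (cl f) \<in> cl f" by (intro rep_in) simp
  then show ?thesis by (simp add: cl_def)
qed

lemma cl_Comp: "cl (Comp f g) = cl f \<odot> cl g"
proof (cases "hwf G f \<and> hwf G g \<and> hdom G f = hcod G g")
  case True
  let ?f = "rep (cl f)" and ?g = "rep (cl g)"
  have "heq G f ?f" "heq G g ?g" using True by (auto simp: rep_cl)
  then have "heq G (Comp f g) (Comp ?f ?g)" using True by (intro heq.comp_cong) auto
  then show ?thesis using True unfolding cc_def by (simp add: heq_cl)
next
  case False
  then show ?thesis unfolding cc_def by (auto simp: cl_empty)
qed

lemma cl_Tens: "cl (Tens f g) = cl f \<otimes> cl g"
proof (cases "hwf G f \<and> hwf G g")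
  case True
  let ?f = "rep (cl f)" and ?g = "rep (cl g)"
  have "heq G f ?f" "heq G g ?g" using True by (auto simp: rep_cl)
  then have "heq G (Tens f g) (Tens ?f ?g)" using True by (intro heq.tens_cong) auto
  then show ?thesis using True unfolding ct_def by (simp add: heq_cl)
next
  case False
  then show ?thesis unfolding ct_def by (auto simp: cl_empty)
qed

lemma ok_cc[simp]: "ok (C \<odot> D) \<longleftrightarrow> ok C \<and> ok D \<and> cdom C = ccod D"
  unfolding cc_def using ok_rep by (auto simp: cdom_def ccod_def)
lemma ok_ct[simp]: "ok (C \<otimes> D) \<longleftrightarrow> ok C \<and> ok D"
  unfolding ct_def using ok_rep by auto
lemma cdom_cc[simp]: "ok C \<Longrightarrow> ok D \<Longrightarrow> cdom C = ccod D \<Longrightarrow> cdom (C \<odot> D) = cdom D"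
proof -
  assume a: "ok C" "ok D" "cdom C = ccod D"
  then have "hwf G (Comp (rep C) (rep D))" using ok_rep by (auto simp: cdom_def ccod_def)
  then show ?thesis using a unfolding cc_def by (simp add: cdom_def[of D])
qed
lemma ccod_cc[simp]: "ok C \<Longrightarrow> ok D \<Longrightarrow> cdom C = ccod D \<Longrightarrow> ccod (C \<odot> D) = ccod C"
proof -
  assume a: "ok C" "ok D" "cdom C = ccod D"
  then have "hwf G (Comp (rep C) (rep D))" using ok_rep by (auto simp: cdom_def ccod_def)
  then show ?thesis using a unfolding cc_def by (simp add: ccod_def[of C])
qed
lemma cdom_ct[simp]: "ok C \<Longrightarrow> ok D \<Longrightarrow> cdom (C \<otimes> D) = cdom C @ cdom D"
proof -
  assume a: "ok C" "ok D"
  then have "hwf G (Tens (rep C) (rep D))" using ok_rep by auto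
  then show ?thesis using a unfolding ct_def by (simp add: cdom_def[of D] cdom_def[of C])
qed
lemma ccod_ct[simp]: "ok C \<Longrightarrow> ok D \<Longrightarrow> ccod (C \<otimes> D) = ccod C @ ccod D"
proof -
  assume a: "ok C" "ok D"
  then have "hwf G (Tens (rep C) (rep D))" using ok_rep by auto
  then show ?thesis using a unfolding ct_def by (simp add: ccod_def[of D] ccod_def[of C])
qed

lemma cc_bad: "\<not> (ok C \<and> ok D \<and> cdom C = ccod D) \<Longrightarrow> C \<odot> D = {}" unfolding cc_def by auto
lemma ct_bad: "\<not> (ok C \<and> ok D) \<Longrightarrow> C \<otimes> D = {}" unfolding ct_def by auto
lemma cc_empty[simp]: "{} \<odot> D = {}" "C \<odot> {} = {}" by (auto simp: cc_bad)
lemma ct_empty[simp]: "{} \<otimes> D = {}" "C \<otimes> {} = {}" by (auto simp: ct_bad)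

lemma U_simps[simp]: "U (cl f)" "U (C \<odot> D)" "U (C \<otimes> D)" "U {}"
  unfolding U_def
  subgoal by (cases "hwf G f") (auto simp: cl_empty)
  subgoal by (cases "ok C \<and> ok D \<and> cdom C = ccod D") (simp_all add: cc_bad)
  subgoal by (cases "ok C \<and> ok D") (simp_all add: ct_bad)
  subgoal by simp
  done

lemma cc_assoc: "(C \<odot> D) \<odot> E = C \<odot> (D \<odot> E)"
proof (cases "ok C \<and> ok D \<and> ok E \<and> cdom C = ccod D \<and> cdom D = ccod E")
  case True
  obtain f g h where fgh: "hwf G f" "hwf G g" "hwf G h" "C = cl f" "D = cl g" "E = cl h"
    using True ok_rep by metis
  then have "hdom G f = hcod G g" "hdom G g = hcod G h" using True by auto
  then have "heq G (Comp (Comp f g) h) (Comp f (Comp g h))" using fgh by (intro heq.comp_assoc) auto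
  then show ?thesis using fgh by (simp add: heq_cl flip: cl_Comp)
next
  case False
  then show ?thesis by (auto simp: cc_bad)
qed

lemma ct_assoc: "(C \<otimes> D) \<otimes> E = C \<otimes> (D \<otimes> E)"
proof (cases "ok C \<and> ok D \<and> ok E")
  case True
  obtain f g h where fgh: "hwf G f" "hwf G g" "hwf G h" "C = cl f" "D = cl g" "E = cl h"
    using True ok_rep by metis
  then have "heq G (Tens (Tens f g) h) (Tens f (Tens g h))" by (intro heq.tens_assoc) auto
  then show ?thesis using fgh by (simp add: heq_cl flip: cl_Tens)
next
  case False
  then show ?thesis by (auto simp: ct_bad)
qed

lemma id_left: "U C \<Longrightarrow> (ok C \<Longrightarrow> ccod C = w) \<Longrightarrow> (C = {} \<Longrightarrow> set w \<subseteq> gAr G) \<Longrightarrow> cl (Id w) \<odot> C = C"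
proof (cases "ok C")
  case True
  assume a: "ok C \<Longrightarrow> ccod C = w"
  obtain f where f: "hwf G f" "C = cl f" using True ok_rep by metis
  then have "heq G (Comp (Id (hcod G f)) f) f" by (intro heq.comp_idl)
  then show ?thesis using f a True by (simp add: heq_cl flip: cl_Comp)
qed (auto simp: U_def)

lemma id_right: "U C \<Longrightarrow> (ok C \<Longrightarrow> cdom C = w) \<Longrightarrow> C \<odot> cl (Id w) = C"
proof (cases "ok C")
  case True
  assume a: "ok C \<Longrightarrow> cdom C = w"
  obtain f where f: "hwf G f" "C = cl f" using True ok_rep by metis
  then have "heq G (Comp f (Id (hdom G f))) f" by (intro heq.comp_idr)
  then show ?thesis using f a True by (simp add: heq_cl flip: cl_Comp)
qed (auto simp: U_def)

lemma unit_left[simp]: "U C \<Longrightarrow> cl (Id []) \<otimes> C = C"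
proof (cases "ok C")
  case True
  obtain f where f: "hwf G f" "C = cl f" using True ok_rep by metis
  then have "heq G (Tens (Id []) f) f" by (intro heq.tens_unitl)
  then show ?thesis using f True by (simp add: heq_cl flip: cl_Tens)
qed (auto simp: U_def)

lemma unit_right[simp]: "U C \<Longrightarrow> C \<otimes> cl (Id []) = C"
proof (cases "ok C")
  case True
  obtain f where f: "hwf G f" "C = cl f" using True ok_rep by metis
  then have "heq G (Tens f (Id [])) f" by (intro heq.tens_unitr)
  then show ?thesis using f True by (simp add: heq_cl flip: cl_Tens)
qed (auto simp: U_def)

lemma tens_id: "cl (Id w) \<otimes> cl (Id v) = cl (Id (w @ v))"
proof (cases "set w \<subseteq> gAr G \<and> set v \<subseteq> gAr G")
  case True
  then show ?thesis by (simp add: heq_cl heq.tens_id flip: cl_Tens)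
next
  case False
  then show ?thesis by (auto simp: ct_bad cl_empty)
qed

lemma interchange: "ok A \<Longrightarrow> ok A' \<Longrightarrow> ok B \<Longrightarrow> ok B' \<Longrightarrow> cdom A = ccod A' \<Longrightarrow> cdom B = ccod B' \<Longrightarrow>
  (A \<odot> A') \<otimes> (B \<odot> B') = (A \<otimes> B) \<odot> (A' \<otimes> B')"
proof -
  assume a: "ok A" "ok A'" "ok B" "ok B'" "cdom A = ccod A'" "cdom B = ccod B'"
  obtain f f' g g' where f: "hwf G f" "A = cl f" "hwf G f'" "A' = cl f'" "hwf G g" "B = cl g" "hwf G g'" "B' = cl g'"
    using a ok_rep by metis
  then have "heq G (Tens (Comp f f') (Comp g g')) (Comp (Tens f g) (Tens f' g'))"
    using a by (intro heq.interchange) auto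
  then show ?thesis using f by (simp add: heq_cl flip: cl_Tens cl_Comp)
qed

end

context gpd begin

abbreviation I where "I w \<equiv> cl (Id w)"
abbreviation dl where "dl g \<equiv> cl (Dl g)"
abbreviation ep where "ep g \<equiv> cl (Ep g)"
abbreviation mu where "mu g h \<equiv> cl (Mu g h)"
abbreviation et where "et i \<equiv> cl (Et i)"
abbreviation an where "an g \<equiv> cl (An g)"
abbreviation br where "br w v \<equiv> cl (Br w v)"
abbreviation bri where "bri w v \<equiv> cl (BrI w v)"

definition W :: "'a list \<Rightarrow> ('o,'a) hm set \<Rightarrow> 'a list \<Rightarrow> ('o,'a) hm set" where
  "W l C r = I l \<otimes> C \<otimes> I r"

lemma ok_I[simp]: "ok (I w) \<longleftrightarrow> set w \<subseteq> gAr G" by simp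
lemma cdom_I[simp]: "set w \<subseteq> gAr G \<Longrightarrow> cdom (I w) = w" by simp
lemma ccod_I[simp]: "set w \<subseteq> gAr G \<Longrightarrow> ccod (I w) = w" by simp

lemma ok_W[simp]: "ok (W l C r) \<longleftrightarrow> set l \<subseteq> gAr G \<and> set r \<subseteq> gAr G \<and> ok C"
  unfolding W_def by auto
lemma cdom_W[simp]: "ok (W l C r) \<Longrightarrow> cdom (W l C r) = l @ cdom C @ r"
  unfolding W_def by (auto simp del: ok_cl)
lemma ccod_W[simp]: "ok (W l C r) \<Longrightarrow> ccod (W l C r) = l @ ccod C @ r"
  unfolding W_def by (auto simp del: ok_cl)
lemma U_W[simp]: "U (W l C r)" unfolding W_def by simp

lemma cdom_ar[simp]: "ok C \<Longrightarrow> set (cdom C) \<subseteq> gAr G"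
  using ok_rep hwf_set unfolding cdom_def by blast
lemma ccod_ar[simp]: "ok C \<Longrightarrow> set (ccod C) \<subseteq> gAr G"
  using ok_rep hwf_set unfolding ccod_def by blast
lemma W_bad: "\<not> ok (W l C r) \<Longrightarrow> W l C r = {}"
  unfolding W_def by (auto simp: ct_bad simp del: ok_cl ok_W)
lemma W_empty[simp]: "W l {} r = {}" unfolding W_def by simp
lemma idl_ok: "ok C \<Longrightarrow> I (ccod C) \<odot> C = C" by (rule id_left) (auto simp: U_def)
lemma idr_ok: "ok C \<Longrightarrow> C \<odot> I (cdom C) = C" by (rule id_right) (auto simp: U_def)

lemma U_ok: "U C \<Longrightarrow> \<not> ok C \<Longrightarrow> C = {}" unfolding U_def by auto

lemma I_I: "set w \<subseteq> gAr G \<Longrightarrow> I w \<odot> I w = I w"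
  by (rule id_left) auto

lemma W_cc: "W l (C \<odot> D) r = W l C r \<odot> W l D r"
proof (cases "set l \<subseteq> gAr G \<and> set r \<subseteq> gAr G \<and> ok C \<and> ok D")
  case True
  note T = True
  show ?thesis
  proof (cases "cdom C = ccod D")
    case True
    have "W l (C \<odot> D) r = (I l \<odot> I l) \<otimes> ((C \<odot> D) \<otimes> (I r \<odot> I r))"
      unfolding W_def using T by (simp add: I_I)
    also have "\<dots> = (I l \<odot> I l) \<otimes> ((C \<otimes> I r) \<odot> (D \<otimes> I r))"
      using T True by (subst interchange) auto
    also have "\<dots> = W l C r \<odot> W l D r"
      unfolding W_def using T True by (subst interchange) auto
    finally show ?thesis .
  next
    case False
    then show ?thesis using T by (simp add: cc_bad)
  qed
next
  case False
  then have "W l C r = {} \<or> W l D r = {}" "W l (C \<odot> D) r = {}" by (auto intro!: W_bad)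
  then show ?thesis by auto
qed

lemma W_W: "W l (W l' C r') r = W (l @ l') C (r' @ r)"
proof -
  have "W l (W l' C r') r = I l \<otimes> (I l' \<otimes> (C \<otimes> (I r' \<otimes> I r)))"
    unfolding W_def by (simp only: ct_assoc)
  also have "\<dots> = (I l \<otimes> I l') \<otimes> (C \<otimes> (I r' \<otimes> I r))"
    by (simp only: ct_assoc)
  finally show ?thesis unfolding W_def by (simp only: tens_id)
qed

lemma W_nil: "U C \<Longrightarrow> W [] C [] = C"
  unfolding W_def by simp

lemma W_I: "W l (I w) r = I (l @ w @ r)"
  unfolding W_def by (simp add: tens_id)

lemma Il_ct: "U C \<Longrightarrow> I l \<otimes> C = W l C []" unfolding W_def by simp
lemma ct_Ir: "U C \<Longrightarrow> C \<otimes> I r = W [] C r" unfolding W_def by (simp add: ct_assoc)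

lemma ct_split1: "ok A \<Longrightarrow> ok B \<Longrightarrow> A \<otimes> B = W [] A (ccod B) \<odot> W (cdom A) B []"
proof -
  assume a: "ok A" "ok B"
  have "A \<otimes> B = (A \<odot> I (cdom A)) \<otimes> (I (ccod B) \<odot> B)"
    using a by (simp add: idl_ok idr_ok)
  also have "\<dots> = (A \<otimes> I (ccod B)) \<odot> (I (cdom A) \<otimes> B)"
    using a by (subst interchange) auto
  also have "\<dots> = W [] A (ccod B) \<odot> W (cdom A) B []"
    using a by (simp add: Il_ct ct_Ir U_def)
  finally show ?thesis .
qed

lemma ct_split2: "ok A \<Longrightarrow> ok B \<Longrightarrow> A \<otimes> B = W (ccod A) B [] \<odot> W [] A (cdom B)"
proof -
  assume a: "ok A" "ok B"
  have "A \<otimes> B = (I (ccod A) \<odot> A) \<otimes> (B \<odot> I (cdom B))"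
    using a by (simp add: idl_ok idr_ok)
  also have "\<dots> = (I (ccod A) \<otimes> B) \<odot> (A \<otimes> I (cdom B))"
    using a by (subst interchange) auto
  also have "\<dots> = W (ccod A) B [] \<odot> W [] A (cdom B)"
    using a by (simp add: Il_ct ct_Ir U_def)
  finally show ?thesis .
qed

lemma W_swap: "ok A \<Longrightarrow> ok B \<Longrightarrow>
  W l A (m @ ccod B @ r) \<odot> W (l @ cdom A @ m) B r = W (l @ ccod A @ m) B r \<odot> W l A (m @ cdom B @ r)"
proof (cases "set l \<subseteq> gAr G \<and> set m \<subseteq> gAr G \<and> set r \<subseteq> gAr G")
  case True
  assume a: "ok A" "ok B"
  have "A \<otimes> W m B [] = W [] A (m @ ccod B) \<odot> W (cdom A @ m) B []"
    using a True by (subst ct_split1) (auto simp: W_W)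
  moreover have "A \<otimes> W m B [] = W (ccod A @ m) B [] \<odot> W [] A (m @ cdom B)"
    using a True by (subst ct_split2) (auto simp: W_W)
  ultimately have "W l (W [] A (m @ ccod B) \<odot> W (cdom A @ m) B []) r = W l (W (ccod A @ m) B [] \<odot> W [] A (m @ cdom B)) r"
    by simp
  then show ?thesis by (simp add: W_cc W_W)
next
  case False
  then have "\<not> ok (W l A (m @ ccod B @ r)) \<or> \<not> ok (W (l @ cdom A @ m) B r)"
    "\<not> ok (W (l @ ccod A @ m) B r) \<or> \<not> ok (W l A (m @ cdom B @ r))" by auto
  then show ?thesis using W_bad by (metis cc_empty)
qed

lemmas nrm = cc_assoc W_cc W_W W_nil U_simps U_W append.simps append_Nil2 append_assoc

lemma ok_atoms[simp]:
  "ok (dl g) \<longleftrightarrow> g \<in> gAr G" "ok (ep g) \<longleftrightarrow> g \<in> gAr G" "ok (an g) \<longleftrightarrow> g \<in> gAr G"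
  "ok (mu g h) \<longleftrightarrow> g \<in> gAr G \<and> h \<in> gAr G \<and> gtgt G g = gsrc G h"
  "ok (et i) \<longleftrightarrow> i \<in> gOb G"
  "ok (br w v) \<longleftrightarrow> set w \<subseteq> gAr G \<and> set v \<subseteq> gAr G"
  "ok (bri w v) \<longleftrightarrow> set w \<subseteq> gAr G \<and> set v \<subseteq> gAr G"
  by simp_all

lemma ax_coassoc: "g \<in> gAr G \<Longrightarrow> W [] (dl g) [g] \<odot> dl g = W [g] (dl g) [] \<odot> dl g"
  using heq_cl[OF heq.coassoc, of g] by (simp add: cl_Comp cl_Tens ct_Ir Il_ct)
lemma ax_counitl: "g \<in> gAr G \<Longrightarrow> W [] (ep g) [g] \<odot> dl g = I [g]"
  using heq_cl[OF heq.counitl, of g] by (simp add: cl_Comp cl_Tens ct_Ir Il_ct)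
lemma ax_counitr: "g \<in> gAr G \<Longrightarrow> W [g] (ep g) [] \<odot> dl g = I [g]"
  using heq_cl[OF heq.counitr, of g] by (simp add: cl_Comp cl_Tens ct_Ir Il_ct)
lemma ax_massoc: "g \<in> gAr G \<Longrightarrow> h \<in> gAr G \<Longrightarrow> k \<in> gAr G \<Longrightarrow> gtgt G g = gsrc G h \<Longrightarrow> gtgt G h = gsrc G k \<Longrightarrow>
  mu (gcmp G g h) k \<odot> W [] (mu g h) [k] = mu g (gcmp G h k) \<odot> W [g] (mu h k) []"
  using heq_cl[OF heq.massoc, of g h k] by (simp add: cl_Comp cl_Tens ct_Ir Il_ct)
lemma ax_unitr: "g \<in> gAr G \<Longrightarrow> mu g (gid G (gtgt G g)) \<odot> W [g] (et (gtgt G g)) [] = I [g]"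
  using heq_cl[OF heq.unitr, of g] by (simp add: cl_Comp cl_Tens ct_Ir Il_ct)
lemma ax_unitl: "g \<in> gAr G \<Longrightarrow> mu (gid G (gsrc G g)) g \<odot> W [] (et (gsrc G g)) [g] = I [g]"
  using heq_cl[OF heq.unitl, of g] by (simp add: cl_Comp cl_Tens ct_Ir Il_ct)
lemma ax_bialg: "g \<in> gAr G \<Longrightarrow> h \<in> gAr G \<Longrightarrow> gtgt G g = gsrc G h \<Longrightarrow>
  W [] (mu g h) [gcmp G g h] \<odot> W [g, h] (mu g h) [] \<odot> W [g] (br [g] [h]) [h] \<odot> W [] (dl g) [h, h] \<odot> W [g] (dl h) []
   = dl (gcmp G g h) \<odot> mu g h"
proof -
  assume a: "g \<in> gAr G" "h \<in> gAr G" "gtgt G g = gsrc G h"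
  have "mu g h \<otimes> mu g h = W [] (mu g h) [gcmp G g h] \<odot> W [g, h] (mu g h) []"
    using a by (subst ct_split1) auto
  moreover have "dl g \<otimes> dl h = W [] (dl g) [h, h] \<odot> W [g] (dl h) []"
    using a by (subst ct_split1) auto
  moreover have "(I [g] \<otimes> br [g] [h]) \<otimes> I [h] = W [g] (br [g] [h]) [h]"
    by (simp add: W_def ct_assoc)
  ultimately show ?thesis using heq_cl[OF heq.bialg, of g h] a by (simp add: cl_Comp cl_Tens cc_assoc)
qed
lemma ax_counit_mult: "g \<in> gAr G \<Longrightarrow> h \<in> gAr G \<Longrightarrow> gtgt G g = gsrc G h \<Longrightarrow>
  ep (gcmp G g h) \<odot> mu g h = ep g \<odot> W [g] (ep h) []"
proof -
  assume a: "g \<in> gAr G" "h \<in> gAr G" "gtgt G g = gsrc G h"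
  have "ep g \<otimes> ep h = W [] (ep g) [] \<odot> W [g] (ep h) []"
    using a by (subst ct_split1) auto
  then show ?thesis using heq_cl[OF heq.counit_mult, of g h] a by (simp add: cl_Comp cl_Tens W_nil)
qed
lemma ax_delta_unit: "i \<in> gOb G \<Longrightarrow> dl (gid G i) \<odot> et i = W [gid G i] (et i) [] \<odot> et i"
proof -
  assume a: "i \<in> gOb G"
  have "et i \<otimes> et i = W [gid G i] (et i) [] \<odot> W [] (et i) []"
    using a by (subst ct_split2) auto
  then show ?thesis using heq_cl[OF heq.delta_unit, of i] a by (simp add: cl_Comp cl_Tens W_nil)
qed
lemma ax_counit_unit: "i \<in> gOb G \<Longrightarrow> ep (gid G i) \<odot> et i = I []"
  using heq_cl[OF heq.counit_unit, of i] by (simp add: cl_Comp cl_Tens)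
lemma ax_antipodel: "g \<in> gAr G \<Longrightarrow> mu (ginv G g) g \<odot> W [] (an g) [g] \<odot> dl g = et (gtgt G g) \<odot> ep g"
  using heq_cl[OF heq.antipodel, of g] by (simp add: cl_Comp cl_Tens ct_Ir Il_ct)
lemma ax_antipoder: "g \<in> gAr G \<Longrightarrow> mu g (ginv G g) \<odot> W [g] (an g) [] \<odot> dl g = et (gsrc G g) \<odot> ep g"
  using heq_cl[OF heq.antipoder, of g] by (simp add: cl_Comp cl_Tens ct_Ir Il_ct)
lemma ax_nat: "ok F \<Longrightarrow> ok H \<Longrightarrow> br (ccod F) (ccod H) \<odot> (F \<otimes> H) = (H \<otimes> F) \<odot> br (cdom F) (cdom H)"
proof -
  assume a: "ok F" "ok H"
  then obtain f h where f: "hwf G f" "F = cl f" "hwf G h" "H = cl h" using ok_rep by metis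
  show ?thesis using heq_cl[OF heq.br_nat[OF f(1) f(3)]] f by (simp add: cl_Comp cl_Tens)
qed
lemma nat_l: "ok F \<Longrightarrow> set v \<subseteq> gAr G \<Longrightarrow> br (ccod F) v \<odot> W [] F v = W v F [] \<odot> br (cdom F) v"
  using ax_nat[of F "I v"] by (simp add: ct_Ir Il_ct U_def)
lemma nat_r: "ok F \<Longrightarrow> set w \<subseteq> gAr G \<Longrightarrow> br w (ccod F) \<odot> W w F [] = W [] F w \<odot> br w (cdom F)"
  using ax_nat[of "I w" F] by (simp add: ct_Ir Il_ct U_def)
lemma hex1: "set w \<subseteq> gAr G \<Longrightarrow> set u \<subseteq> gAr G \<Longrightarrow> set v \<subseteq> gAr G \<Longrightarrow>
  br w (u @ v) = W u (br w v) [] \<odot> W [] (br w u) v"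
  using heq_cl[OF heq.hex1, of w u v] by (simp add: cl_Comp cl_Tens ct_Ir Il_ct)
lemma hex2: "set w \<subseteq> gAr G \<Longrightarrow> set u \<subseteq> gAr G \<Longrightarrow> set v \<subseteq> gAr G \<Longrightarrow>
  br (w @ u) v = W [] (br w v) u \<odot> W w (br u v) []"
  using heq_cl[OF heq.hex2, of w u v] by (simp add: cl_Comp cl_Tens ct_Ir Il_ct)
lemma br_inv1: "set w \<subseteq> gAr G \<Longrightarrow> set v \<subseteq> gAr G \<Longrightarrow> br w v \<odot> bri w v = I (v @ w)"
  using heq_cl[OF heq.br_inv1, of w v] by (simp add: cl_Comp)
lemma br_inv2: "set w \<subseteq> gAr G \<Longrightarrow> set v \<subseteq> gAr G \<Longrightarrow> bri w v \<odot> br w v = I (w @ v)"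
  using heq_cl[OF heq.br_inv2, of w v] by (simp add: cl_Comp)

lemma br_nil1: assumes "set v \<subseteq> gAr G" shows "br [] v = I v"
proof -
  have h: "br [] v = br [] v \<odot> br [] v" using hex2[of "[]" "[]" v] assms by (simp add: W_nil)
  have "br [] v = br [] v \<odot> I v" using assms by (subst id_right) auto
  also have "\<dots> = br [] v \<odot> (br [] v \<odot> bri [] v)" using assms by (simp add: br_inv1)
  also have "\<dots> = br [] v \<odot> bri [] v" by (simp flip: cc_assoc h)
  also have "\<dots> = I v" using assms by (simp add: br_inv1)
  finally show ?thesis .
qed
lemma br_nil2: assumes "set v \<subseteq> gAr G" shows "br v [] = I v"
proof -
  have h: "br v [] = br v [] \<odot> br v []" using hex1[of v "[]" "[]"] assms by (simp add: W_nil)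
  have "br v [] = br v [] \<odot> I v" using assms by (subst id_right) auto
  also have "\<dots> = br v [] \<odot> (br v [] \<odot> bri v [])" using assms by (simp add: br_inv1)
  also have "\<dots> = br v [] \<odot> bri v []" by (simp flip: cc_assoc h)
  also have "\<dots> = I v" using assms by (simp add: br_inv1)
  finally show ?thesis .
qed

end

context gpd begin

lemma cont: "A \<odot> B = C \<Longrightarrow> A \<odot> (B \<odot> K) = C \<odot> K" by (simp flip: cc_assoc)

lemma an_et: assumes i: "i \<in> gOb G" shows "an (gid G i) \<odot> et i = et i"
proof -
  let ?e = "gid G i"
  have ap: "mu ?e ?e \<odot> W [] (an ?e) [?e] \<odot> dl ?e = et i \<odot> ep ?e"
    using ax_antipodel[of ?e] i by simp
  have "mu ?e ?e \<odot> W [] (an ?e) [?e] \<odot> dl ?e \<odot> et i = mu ?e ?e \<odot> W [] (an ?e) [?e] \<odot> W [?e] (et i) [] \<odot> et i"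
    using ax_delta_unit[OF i] by simp
  also have "\<dots> = mu ?e ?e \<odot> W [?e] (et i) [] \<odot> W [] (an ?e) [] \<odot> et i"
    using W_swap[of "an ?e" "et i" "[]" "[]" "[]"] i by (simp add: cont)
  also have "\<dots> = I [?e] \<odot> an ?e \<odot> et i"
    using ax_unitr[of ?e] i by (simp add: W_nil flip: cc_assoc)
  also have "\<dots> = an ?e \<odot> et i"
    using i by (subst id_left) auto
  finally have "an ?e \<odot> et i = et i \<odot> ep ?e \<odot> et i" using ap by (simp flip: cc_assoc)
  also have "\<dots> = et i" using i ax_counit_unit[OF i] by (simp add: id_right)
  finally show ?thesis .
qed


lemma cancel1[simp]: "f \<in> gAr G \<Longrightarrow> g \<in> gAr G \<Longrightarrow> gsrc G g = gsrc G f \<Longrightarrow> gcmp G f (gcmp G (ginv G f) g) = g"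
  by (subst cmp_assoc[symmetric]) auto
lemma cancel2[simp]: "f \<in> gAr G \<Longrightarrow> g \<in> gAr G \<Longrightarrow> gsrc G g = gtgt G f \<Longrightarrow> gcmp G (ginv G f) (gcmp G f g) = g"
  by (subst cmp_assoc[symmetric]) auto
declare cmp_assoc[simp]

lemma ok_U[simp]: "ok C \<Longrightarrow> U C" by (simp add: U_def)

lemma idl2: "ok C \<Longrightarrow> ccod C = w \<Longrightarrow> I w \<odot> C = C" using idl_ok by blast
lemma idr2: "ok C \<Longrightarrow> cdom C = w \<Longrightarrow> C \<odot> I w = C" using idr_ok by blast

lemmas ws = W_cc W_W W_I W_nil

lemma wh: "A = B \<Longrightarrow> W l A r = W l B r" by simp
lemma ctx: "A = B \<Longrightarrow> A \<odot> K = B \<odot> K" by simp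

definition dXd where "dXd a b = W [a] (br [a] [b]) [b] \<odot> W [] (dl a) [b, b] \<odot> W [a] (dl b) []"
definition eXd where "eXd a b = ep a \<odot> W [a] (ep b) []"
definition cvd where "cvd a b c d F H = mu c d \<odot> W [] F [d] \<odot> W [a,b] H [] \<odot> dXd a b"

lemma ok_dXd[simp]: "a \<in> gAr G \<Longrightarrow> b \<in> gAr G \<Longrightarrow> ok (dXd a b)"
  "a \<in> gAr G \<Longrightarrow> b \<in> gAr G \<Longrightarrow> cdom (dXd a b) = [a,b]"
  "a \<in> gAr G \<Longrightarrow> b \<in> gAr G \<Longrightarrow> ccod (dXd a b) = [a,b,a,b]"
  by (simp_all add: dXd_def)
lemma ok_eXd[simp]: "a \<in> gAr G \<Longrightarrow> b \<in> gAr G \<Longrightarrow> ok (eXd a b)"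
  "a \<in> gAr G \<Longrightarrow> b \<in> gAr G \<Longrightarrow> cdom (eXd a b) = [a,b]"
  "a \<in> gAr G \<Longrightarrow> b \<in> gAr G \<Longrightarrow> ccod (eXd a b) = []"
  by (simp_all add: eXd_def)

context
  fixes a b assumes a: "a \<in> gAr G" and b: "b \<in> gAr G" and ab: "gtgt G a = gsrc G b"
begin

abbreviation "dX \<equiv> W [a] (br [a] [b]) [b] \<odot> W [] (dl a) [b, b] \<odot> W [a] (dl b) []"
abbreviation "eX \<equiv> ep a \<odot> W [a] (ep b) []"

lemma c1r: "W [a,b] (ep a) [] \<odot> W [a,b,a] (ep b) [] \<odot> dX = I [a,b]"
proof -
  have e1: "W [a,b,a] (ep b) [] \<odot> W [a] (br [a] [b]) [b] = W [a] (br [a] [b]) [] \<odot> W [a,a,b] (ep b) []"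
    using W_swap[of "br [a] [b]" "ep b" "[a]" "[]" "[]"] a b by simp
  have e2: "W [a,b] (ep a) [] \<odot> W [a] (br [a] [b]) [] = W [a] (ep a) [b]"
  proof -
    have "W [b] (ep a) [] \<odot> br [a] [b] = W [] (ep a) [b]"
      using nat_l[of "ep a" "[b]"] a b by (simp add: br_nil1 id_left)
    from this[THEN wh[where l="[a]" and r="[]"]] show ?thesis by (simp add: W_cc W_W)
  qed
  have e3: "W [a,a,b] (ep b) [] \<odot> W [] (dl a) [b, b] = W [] (dl a) [b] \<odot> W [a,b] (ep b) []"
    using W_swap[of "dl a" "ep b" "[]" "[b]" "[]"] a b by simp
  have e4: "W [a] (ep a) [b] \<odot> W [] (dl a) [b] = I [a,b]"
    using ax_counitr[OF a, THEN wh[where l="[]" and r="[b]"]] by (simp add: ws)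
  have e5: "W [a,b] (ep b) [] \<odot> W [a] (dl b) [] = I [a,b]"
    using ax_counitr[OF b, THEN wh[where l="[a]" and r="[]"]] by (simp add: ws)
  have "W [a,b] (ep a) [] \<odot> W [a,b,a] (ep b) [] \<odot> dX
     = W [a,b] (ep a) [] \<odot> W [a] (br [a] [b]) [] \<odot> W [a,a,b] (ep b) [] \<odot> W [] (dl a) [b, b] \<odot> W [a] (dl b) []"
    by (simp only: cc_assoc e1 e1[THEN ctx, simplified cc_assoc])
  also have "\<dots> = W [a] (ep a) [b] \<odot> W [a,a,b] (ep b) [] \<odot> W [] (dl a) [b, b] \<odot> W [a] (dl b) []"
    by (simp only: cc_assoc e2 e2[THEN ctx, simplified cc_assoc])
  also have "\<dots> = W [a] (ep a) [b] \<odot> W [] (dl a) [b] \<odot> W [a,b] (ep b) [] \<odot> W [a] (dl b) []"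
    by (simp only: cc_assoc e3 e3[THEN ctx, simplified cc_assoc])
  also have "\<dots> = I [a,b] \<odot> I [a,b]"
    by (simp only: cc_assoc e4 e5 e4[THEN ctx, simplified cc_assoc])
  also have "\<dots> = I [a,b]" using a b by (simp add: I_I)
  finally show ?thesis .
qed

lemma c1l: "W [] (ep a) [a,b] \<odot> W [a] (ep b) [a,b] \<odot> dX = I [a,b]"
proof -
  have e1: "W [a] (ep b) [a,b] \<odot> W [a] (br [a] [b]) [b] = W [a,a] (ep b) [b]"
  proof -
    have "W [] (ep b) [a] \<odot> br [a] [b] = W [a] (ep b) []"
      using nat_r[of "ep b" "[a]"] a b by (simp add: br_nil2 id_left)
    from this[THEN wh[where l="[a]" and r="[b]"]] show ?thesis by (simp add: ws)
  qed
  have e2: "W [a,a] (ep b) [b] \<odot> W [] (dl a) [b,b] = W [] (dl a) [b] \<odot> W [a] (ep b) [b]"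
    using W_swap[of "dl a" "ep b" "[]" "[]" "[b]"] a b by simp
  have e3: "W [] (ep a) [a,b] \<odot> W [] (dl a) [b] = I [a,b]"
    using ax_counitl[OF a, THEN wh[where l="[]" and r="[b]"]] by (simp add: ws)
  have e4: "W [a] (ep b) [b] \<odot> W [a] (dl b) [] = I [a,b]"
    using ax_counitl[OF b, THEN wh[where l="[a]" and r="[]"]] by (simp add: ws)
  have "W [] (ep a) [a,b] \<odot> W [a] (ep b) [a,b] \<odot> dX
     = W [] (ep a) [a,b] \<odot> W [a,a] (ep b) [b] \<odot> W [] (dl a) [b, b] \<odot> W [a] (dl b) []"
    by (simp only: cc_assoc e1 e1[THEN ctx, simplified cc_assoc])
  also have "\<dots> = W [] (ep a) [a,b] \<odot> W [] (dl a) [b] \<odot> W [a] (ep b) [b] \<odot> W [a] (dl b) []"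
    by (simp only: cc_assoc e2 e2[THEN ctx, simplified cc_assoc])
  also have "\<dots> = I [a,b] \<odot> I [a,b]"
    by (simp only: cc_assoc e3 e4 e3[THEN ctx, simplified cc_assoc])
  also have "\<dots> = I [a,b]" using a b by (simp add: I_I)
  finally show ?thesis .
qed

lemma c2: "W [a,b] dX [] \<odot> dX = W [] dX [a,b] \<odot> dX"
proof -
  have L1: "W [a,b,a] (dl b) [] \<odot> W [a] (br [a] [b]) [b] = W [a] (br [a] [b]) [b,b] \<odot> W [a,a,b] (dl b) []"
    using W_swap[of "br [a] [b]" "dl b" "[a]" "[]" "[]"] a b by simp
  have L2: "W [a,a,b] (dl b) [] \<odot> W [] (dl a) [b,b] = W [] (dl a) [b,b,b] \<odot> W [a,b] (dl b) []"
    using W_swap[of "dl a" "dl b" "[]" "[b]" "[]"] a b by simp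
  have L3: "W [a,b] (dl a) [b,b] \<odot> W [a] (br [a] [b]) [b,b] = W [a] (br [a] [b]) [a,b,b] \<odot> W [a,a] (br [a] [b]) [b,b] \<odot> W [a] (dl a) [b,b,b]"
  proof -
    have "W [b] (dl a) [] \<odot> br [a] [b] = br [a,a] [b] \<odot> W [] (dl a) [b]"
      using nat_l[of "dl a" "[b]"] a b by simp
    also have "\<dots> = W [] (br [a] [b]) [a] \<odot> W [a] (br [a] [b]) [] \<odot> W [] (dl a) [b]"
      using hex2[of "[a]" "[a]" "[b]"] a b by (simp add: cc_assoc)
    finally have "W [b] (dl a) [] \<odot> br [a] [b] = W [] (br [a] [b]) [a] \<odot> W [a] (br [a] [b]) [] \<odot> W [] (dl a) [b]" .
    from this[THEN wh[where l="[a]" and r="[b,b]"]] show ?thesis by (simp add: ws)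
  qed
  have L4: "W [a] (dl a) [b,b,b] \<odot> W [] (dl a) [b,b,b] = W [] (dl a) [a,b,b,b] \<odot> W [] (dl a) [b,b,b]"
    using ax_coassoc[OF a, THEN wh[where l="[]" and r="[b,b,b]"]] by (simp add: ws)
  have L5: "W [a,b] (dl b) [] \<odot> W [a] (dl b) [] = W [a] (dl b) [b] \<odot> W [a] (dl b) []"
    using ax_coassoc[OF b, THEN wh[where l="[a]" and r="[]"]] by (simp add: ws)
  have R1: "W [a] (dl b) [a,b] \<odot> W [a] (br [a] [b]) [b] = W [a,b] (br [a] [b]) [b] \<odot> W [a] (br [a] [b]) [b,b] \<odot> W [a,a] (dl b) [b]"
  proof -
    have "W [] (dl b) [a] \<odot> br [a] [b] = br [a] [b,b] \<odot> W [a] (dl b) []"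
      using nat_r[of "dl b" "[a]"] a b by simp
    also have "\<dots> = W [b] (br [a] [b]) [] \<odot> W [] (br [a] [b]) [b] \<odot> W [a] (dl b) []"
      using hex1[of "[a]" "[b]" "[b]"] a b by (simp add: cc_assoc)
    finally have "W [] (dl b) [a] \<odot> br [a] [b] = W [b] (br [a] [b]) [] \<odot> W [] (br [a] [b]) [b] \<odot> W [a] (dl b) []" .
    from this[THEN wh[where l="[a]" and r="[b]"]] show ?thesis by (simp add: ws)
  qed
  have R2: "W [a,a] (dl b) [b] \<odot> W [] (dl a) [b,b] = W [] (dl a) [b,b,b] \<odot> W [a] (dl b) [b]"
    using W_swap[of "dl a" "dl b" "[]" "[]" "[b]"] a b by simp
  have R3: "W [] (dl a) [b,b,a,b] \<odot> W [a,b] (br [a] [b]) [b] = W [a,a,b] (br [a] [b]) [b] \<odot> W [] (dl a) [b,a,b,b]"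
    using W_swap[of "dl a" "br [a] [b]" "[]" "[b]" "[b]"] a b by simp
  have R4: "W [] (dl a) [b,a,b,b] \<odot> W [a] (br [a] [b]) [b,b] = W [a,a] (br [a] [b]) [b,b] \<odot> W [] (dl a) [a,b,b,b]"
    using W_swap[of "dl a" "br [a] [b]" "[]" "[]" "[b,b]"] a b by simp
  have R5: "W [a] (br [a] [b]) [b,a,b] \<odot> W [a,a,b] (br [a] [b]) [b] = W [a,b,a] (br [a] [b]) [b] \<odot> W [a] (br [a] [b]) [a,b,b]"
    using W_swap[of "br [a] [b]" "br [a] [b]" "[a]" "[]" "[b]"] a b by simp
  have "W [a,b] dX [] \<odot> dX = W [a,b,a] (br [a] [b]) [b] \<odot> W [a,b] (dl a) [b,b] \<odot> W [a,b,a] (dl b) [] \<odot> W [a] (br [a] [b]) [b] \<odot> W [] (dl a) [b,b] \<odot> W [a] (dl b) []"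
    by (simp only: ws cc_assoc append.simps)
  also have "\<dots> = W [a,b,a] (br [a] [b]) [b] \<odot> W [a,b] (dl a) [b,b] \<odot> W [a] (br [a] [b]) [b,b] \<odot> W [a,a,b] (dl b) [] \<odot> W [] (dl a) [b,b] \<odot> W [a] (dl b) []"
    by (simp only: cc_assoc L1 L1[THEN ctx, simplified cc_assoc])
  also have "\<dots> = W [a,b,a] (br [a] [b]) [b] \<odot> W [a] (br [a] [b]) [a,b,b] \<odot> W [a,a] (br [a] [b]) [b,b] \<odot> W [a] (dl a) [b,b,b] \<odot> W [] (dl a) [b,b,b] \<odot> W [a,b] (dl b) [] \<odot> W [a] (dl b) []"
    by (simp only: cc_assoc L3[THEN ctx, simplified cc_assoc] L2 L2[THEN ctx, simplified cc_assoc])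
  also have "\<dots> = W [a,b,a] (br [a] [b]) [b] \<odot> W [a] (br [a] [b]) [a,b,b] \<odot> W [a,a] (br [a] [b]) [b,b] \<odot> W [] (dl a) [a,b,b,b] \<odot> W [] (dl a) [b,b,b] \<odot> W [a] (dl b) [b] \<odot> W [a] (dl b) []"
    by (simp only: cc_assoc L4[THEN ctx, simplified cc_assoc] L5)
  finally have LHS: "W [a,b] dX [] \<odot> dX = W [a,b,a] (br [a] [b]) [b] \<odot> W [a] (br [a] [b]) [a,b,b] \<odot> W [a,a] (br [a] [b]) [b,b] \<odot> W [] (dl a) [a,b,b,b] \<odot> W [] (dl a) [b,b,b] \<odot> W [a] (dl b) [b] \<odot> W [a] (dl b) []" .
  have "W [] dX [a,b] \<odot> dX = W [a] (br [a] [b]) [b,a,b] \<odot> W [] (dl a) [b,b,a,b] \<odot> W [a] (dl b) [a,b] \<odot> W [a] (br [a] [b]) [b] \<odot> W [] (dl a) [b,b] \<odot> W [a] (dl b) []"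
    by (simp only: ws cc_assoc append.simps)
  also have "\<dots> = W [a] (br [a] [b]) [b,a,b] \<odot> W [] (dl a) [b,b,a,b] \<odot> W [a,b] (br [a] [b]) [b] \<odot> W [a] (br [a] [b]) [b,b] \<odot> W [a,a] (dl b) [b] \<odot> W [] (dl a) [b,b] \<odot> W [a] (dl b) []"
    by (simp only: cc_assoc R1[THEN ctx, simplified cc_assoc])
  also have "\<dots> = W [a] (br [a] [b]) [b,a,b] \<odot> W [] (dl a) [b,b,a,b] \<odot> W [a,b] (br [a] [b]) [b] \<odot> W [a] (br [a] [b]) [b,b] \<odot> W [] (dl a) [b,b,b] \<odot> W [a] (dl b) [b] \<odot> W [a] (dl b) []"
    by (simp only: cc_assoc R2[THEN ctx, simplified cc_assoc])
  also have "\<dots> = W [a] (br [a] [b]) [b,a,b] \<odot> W [a,a,b] (br [a] [b]) [b] \<odot> W [a,a] (br [a] [b]) [b,b] \<odot> W [] (dl a) [a,b,b,b] \<odot> W [] (dl a) [b,b,b] \<odot> W [a] (dl b) [b] \<odot> W [a] (dl b) []"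
    by (simp only: cc_assoc R3[THEN ctx, simplified cc_assoc] R4[THEN ctx, simplified cc_assoc])
  also have "\<dots> = W [a,b,a] (br [a] [b]) [b] \<odot> W [a] (br [a] [b]) [a,b,b] \<odot> W [a,a] (br [a] [b]) [b,b] \<odot> W [] (dl a) [a,b,b,b] \<odot> W [] (dl a) [b,b,b] \<odot> W [a] (dl b) [b] \<odot> W [a] (dl b) []"
    by (simp only: cc_assoc R5[THEN ctx, simplified cc_assoc])
  finally show ?thesis using LHS by simp
qed


lemma c1r': "W [a,b] (eXd a b) [] \<odot> dXd a b = I [a,b]"
  using c1r by (simp only: eXd_def dXd_def ws cc_assoc append.simps)
lemma c1l': "W [] (eXd a b) [a,b] \<odot> dXd a b = I [a,b]"
  using c1l by (simp only: eXd_def dXd_def ws cc_assoc append.simps)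
lemma c2': "W [a,b] (dXd a b) [] \<odot> dXd a b = W [] (dXd a b) [a,b] \<odot> dXd a b"
  using c2 by (simp only: dXd_def)

lemma c3: assumes F: "ok F" "cdom F = [a,b]" "ccod F = [c]" and H: "ok H" "cdom H = [a,b]" "ccod H = [d]"
  and K: "ok K" "cdom K = [a,b]" "ccod K = [e]"
  and cde: "c \<in> gAr G" "d \<in> gAr G" "e \<in> gAr G" "gtgt G c = gsrc G d" "gtgt G d = gsrc G e"
  shows "cvd a b (gcmp G c d) e (cvd a b c d F H) K = cvd a b c (gcmp G d e) F (cvd a b d e H K)"
proof -
  have E1: "W [] (dXd a b) [e] \<odot> W [a,b] K [] = W [a,b,a,b] K [] \<odot> W [] (dXd a b) [a,b]"
    using W_swap[of "dXd a b" K "[]" "[]" "[]"] a b K by simp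
  have E2: "W [] F [gcmp G d e] \<odot> W [a,b] (mu d e) [] = W [c] (mu d e) [] \<odot> W [] F [d,e]"
    using W_swap[of F "mu d e" "[]" "[]" "[]"] F cde by simp
  have E3: "mu c (gcmp G d e) \<odot> W [c] (mu d e) [] = mu (gcmp G c d) e \<odot> W [] (mu c d) [e]"
    using ax_massoc[of c d e] cde by (simp only: simp_thms)
  have "cvd a b (gcmp G c d) e (cvd a b c d F H) K
     = mu (gcmp G c d) e \<odot> W [] (mu c d) [e] \<odot> W [] F [d,e] \<odot> W [a,b] H [e] \<odot> W [] (dXd a b) [e] \<odot> W [a,b] K [] \<odot> dXd a b"
    unfolding cvd_def by (simp only: ws cc_assoc append.simps)
  also have "\<dots> = mu (gcmp G c d) e \<odot> W [] (mu c d) [e] \<odot> W [] F [d,e] \<odot> W [a,b] H [e] \<odot> W [a,b,a,b] K [] \<odot> W [] (dXd a b) [a,b] \<odot> dXd a b"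
    by (simp only: cc_assoc E1[THEN ctx, simplified cc_assoc])
  also have "\<dots> = mu (gcmp G c d) e \<odot> W [] (mu c d) [e] \<odot> W [] F [d,e] \<odot> W [a,b] H [e] \<odot> W [a,b,a,b] K [] \<odot> W [a,b] (dXd a b) [] \<odot> dXd a b"
    by (simp only: c2')
  also have "\<dots> = mu c (gcmp G d e) \<odot> W [c] (mu d e) [] \<odot> W [] F [d,e] \<odot> W [a,b] H [e] \<odot> W [a,b,a,b] K [] \<odot> W [a,b] (dXd a b) [] \<odot> dXd a b"
    by (simp only: cc_assoc E3[THEN ctx, simplified cc_assoc])
  also have "\<dots> = mu c (gcmp G d e) \<odot> W [] F [gcmp G d e] \<odot> W [a,b] (mu d e) [] \<odot> W [a,b] H [e] \<odot> W [a,b,a,b] K [] \<odot> W [a,b] (dXd a b) [] \<odot> dXd a b"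
    by (simp only: cc_assoc E2[THEN ctx, simplified cc_assoc])
  also have "\<dots> = cvd a b c (gcmp G d e) F (cvd a b d e H K)"
    unfolding cvd_def by (simp only: ws cc_assoc append.simps)
  finally show ?thesis .
qed

lemma c4r: assumes F: "ok F" "cdom F = [a,b]" "ccod F = [c]" and c: "c \<in> gAr G"
  shows "cvd a b c (gid G (gtgt G c)) F (et (gtgt G c) \<odot> eXd a b) = F"
proof -
  have E1: "W [] F [gid G (gtgt G c)] \<odot> W [a,b] (et (gtgt G c)) [] = W [c] (et (gtgt G c)) [] \<odot> F"
    using W_swap[of F "et (gtgt G c)" "[]" "[]" "[]"] F c by (simp add: W_nil)
  have E2: "mu c (gid G (gtgt G c)) \<odot> W [c] (et (gtgt G c)) [] = I [c]"
    using ax_unitr[OF c] .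
  have "cvd a b c (gid G (gtgt G c)) F (et (gtgt G c) \<odot> eXd a b)
     = mu c (gid G (gtgt G c)) \<odot> W [] F [gid G (gtgt G c)] \<odot> W [a,b] (et (gtgt G c)) [] \<odot> W [a,b] (eXd a b) [] \<odot> dXd a b"
    unfolding cvd_def by (simp only: ws cc_assoc append.simps)
  also have "\<dots> = I [c] \<odot> F \<odot> I [a,b]"
    by (simp only: cc_assoc E1[THEN ctx, simplified cc_assoc] E2[THEN ctx, simplified cc_assoc] c1r')
  also have "\<dots> = F" using F a b by (simp add: idl2 idr2)
  finally show ?thesis .
qed

lemma c4l: assumes H: "ok H" "cdom H = [a,b]" "ccod H = [d]" and d: "d \<in> gAr G"
  shows "cvd a b (gid G (gsrc G d)) d (et (gsrc G d) \<odot> eXd a b) H = H"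
proof -
  have E1: "W [] (eXd a b) [d] \<odot> W [a,b] H [] = H \<odot> W [] (eXd a b) [a,b]"
    using W_swap[of "eXd a b" H "[]" "[]" "[]"] H a b by (simp add: W_nil)
  have E2: "mu (gid G (gsrc G d)) d \<odot> W [] (et (gsrc G d)) [d] = I [d]"
    using ax_unitl[OF d] .
  have "cvd a b (gid G (gsrc G d)) d (et (gsrc G d) \<odot> eXd a b) H
     = mu (gid G (gsrc G d)) d \<odot> W [] (et (gsrc G d)) [d] \<odot> W [] (eXd a b) [d] \<odot> W [a,b] H [] \<odot> dXd a b"
    unfolding cvd_def by (simp only: ws cc_assoc append.simps)
  also have "\<dots> = I [d] \<odot> H \<odot> I [a,b]"
    by (simp only: cc_assoc E1[THEN ctx, simplified cc_assoc] E2[THEN ctx, simplified cc_assoc] c1l')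
  also have "\<dots> = H" using H a b by (simp add: idl2 idr2)
  finally show ?thesis .
qed

end

end

context gpd begin

context
  fixes a b assumes a: "a \<in> gAr G" and b: "b \<in> gAr G" and ab: "gtgt G a = gsrc G b"
begin

lemma conv_i: "cvd a b (gcmp G (ginv G b) (ginv G a)) (gcmp G a b) (an (gcmp G a b) \<odot> mu a b) (mu a b)
   = et (gtgt G b) \<odot> eXd a b"
proof -
  let ?g = "gcmp G a b" and ?h = "gcmp G (ginv G b) (ginv G a)"
  have E1: "W [] (mu a b) [?g] \<odot> W [a, b] (mu a b) [] \<odot> W [a] (br [a] [b]) [b] \<odot> W [] (dl a) [b, b] \<odot> W [a] (dl b) []
     = dl ?g \<odot> mu a b" using ax_bialg[OF a b ab] .
  have E2: "mu ?h ?g \<odot> W [] (an ?g) [?g] \<odot> dl ?g = et (gtgt G b) \<odot> ep ?g"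
    using ax_antipodel[of ?g] a b ab by simp
  have E3: "ep ?g \<odot> mu a b = ep a \<odot> W [a] (ep b) []" using ax_counit_mult[OF a b ab] .
  have "cvd a b ?h ?g (an ?g \<odot> mu a b) (mu a b)
     = mu ?h ?g \<odot> W [] (an ?g) [?g] \<odot> W [] (mu a b) [?g] \<odot> W [a, b] (mu a b) [] \<odot> W [a] (br [a] [b]) [b] \<odot> W [] (dl a) [b, b] \<odot> W [a] (dl b) []"
    unfolding cvd_def dXd_def by (simp only: ws cc_assoc append.simps)
  also have "\<dots> = mu ?h ?g \<odot> W [] (an ?g) [?g] \<odot> dl ?g \<odot> mu a b"
    by (simp only: cc_assoc E1)
  also have "\<dots> = et (gtgt G b) \<odot> ep ?g \<odot> mu a b"
    by (simp only: cc_assoc E2[THEN ctx, simplified cc_assoc])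
  also have "\<dots> = et (gtgt G b) \<odot> eXd a b"
    unfolding eXd_def by (simp only: E3)
  finally show ?thesis .
qed

abbreviation "Rab \<equiv> mu (ginv G b) (ginv G a) \<odot> W [] (an b) [ginv G a] \<odot> W [b] (an a) [] \<odot> br [a] [b]"

lemma conv_ii: "cvd a b (gcmp G a b) (gcmp G (ginv G b) (ginv G a)) (mu a b) Rab = et (gsrc G a) \<odot> eXd a b"
proof -
  let ?g = "gcmp G a b" and ?h = "gcmp G (ginv G b) (ginv G a)" and ?ai = "ginv G a" and ?bi = "ginv G b"
  let ?q = "gsrc G b"
  have S1: "mu ?g ?h \<odot> W [] (mu a b) [?h] = mu a ?ai \<odot> W [a] (mu b ?h) []"
    using ax_massoc[of a b ?h] a b ab by simp
  have S2: "W [a] (mu b ?h) [] \<odot> W [a,b] (mu ?bi ?ai) [] = W [a] (mu (gid G ?q) ?ai) [] \<odot> W [a] (mu b ?bi) [?ai]"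
  proof -
    have "mu (gid G ?q) ?ai \<odot> W [] (mu b ?bi) [?ai] = mu b ?h \<odot> W [b] (mu ?bi ?ai) []"
      using ax_massoc[of b ?bi ?ai] a b ab by simp
    from this[symmetric, THEN wh[where l="[a]" and r="[]"]] show ?thesis by (simp add: ws)
  qed
  have S3: "W [a,b,b] (an a) [] \<odot> W [a,b] (br [a] [b]) [] \<odot> W [a] (br [a] [b]) [b] = W [a] (br [?ai] [b,b]) [] \<odot> W [a] (an a) [b,b]"
  proof -
    have "W [b,b] (an a) [] \<odot> W [b] (br [a] [b]) [] \<odot> W [] (br [a] [b]) [b] = W [b,b] (an a) [] \<odot> br [a] [b,b]"
      using hex1[of "[a]" "[b]" "[b]"] a b by simp
    also have "\<dots> = br [?ai] [b,b] \<odot> W [] (an a) [b,b]"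
      using nat_l[of "an a" "[b,b]"] a b by simp
    finally have "W [b,b] (an a) [] \<odot> W [b] (br [a] [b]) [] \<odot> W [] (br [a] [b]) [b] = br [?ai] [b,b] \<odot> W [] (an a) [b,b]" .
    from this[THEN wh[where l="[a]" and r="[]"]] show ?thesis by (simp add: ws)
  qed
  have S4: "W [] (dl a) [b,b] \<odot> W [a] (dl b) [] = W [a,a] (dl b) [] \<odot> W [] (dl a) [b]"
    using W_swap[of "dl a" "dl b" "[]" "[]" "[]"] a b by simp
  have S5: "W [a] (an a) [b,b] \<odot> W [a,a] (dl b) [] = W [a,?ai] (dl b) [] \<odot> W [a] (an a) [b]"
    using W_swap[of "an a" "dl b" "[a]" "[]" "[]"] a b by simp
  have S6: "W [a] (br [?ai] [b,b]) [] \<odot> W [a,?ai] (dl b) [] = W [a] (dl b) [?ai] \<odot> W [a] (br [?ai] [b]) []"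
  proof -
    have "br [?ai] [b,b] \<odot> W [?ai] (dl b) [] = W [] (dl b) [?ai] \<odot> br [?ai] [b]"
      using nat_r[of "dl b" "[?ai]"] a b by simp
    from this[THEN wh[where l="[a]" and r="[]"]] show ?thesis by (simp add: ws)
  qed
  have S7: "W [a] (mu b ?bi) [?ai] \<odot> W [a,b] (an b) [?ai] \<odot> W [a] (dl b) [?ai] = W [a] (et ?q) [?ai] \<odot> W [a] (ep b) [?ai]"
    using ax_antipoder[OF b, THEN wh[where l="[a]" and r="[?ai]"]] by (simp add: ws)
  have S8: "W [a] (mu (gid G ?q) ?ai) [] \<odot> W [a] (et ?q) [?ai] = I [a,?ai]"
  proof -
    have "mu (gid G ?q) ?ai \<odot> W [] (et ?q) [?ai] = I [?ai]"
      using ax_unitl[of ?ai] a ab by simp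
    from this[THEN wh[where l="[a]" and r="[]"]] show ?thesis by (simp add: ws)
  qed
  have S9: "mu a ?ai \<odot> I [a,?ai] = mu a ?ai" using a by (simp add: idr2)
  have S10: "W [a] (ep b) [?ai] \<odot> W [a] (br [?ai] [b]) [] = W [a,?ai] (ep b) []"
  proof -
    have "W [?ai] (ep b) [] = W [] (ep b) [?ai] \<odot> br [?ai] [b]"
      using nat_r[of "ep b" "[?ai]"] a b by (simp add: br_nil2 idl2)
    from this[symmetric, THEN wh[where l="[a]" and r="[]"]] show ?thesis by (simp add: ws)
  qed
  have S11: "W [a,?ai] (ep b) [] \<odot> W [a] (an a) [b] = W [a] (an a) [] \<odot> W [a,a] (ep b) []"
    using W_swap[of "an a" "ep b" "[a]" "[]" "[]"] a b by simp
  have S12: "W [a,a] (ep b) [] \<odot> W [] (dl a) [b] = dl a \<odot> W [a] (ep b) []"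
    using W_swap[of "dl a" "ep b" "[]" "[]" "[]"] a b by (simp add: W_nil)
  have S13: "mu a ?ai \<odot> W [a] (an a) [] \<odot> dl a = et (gsrc G a) \<odot> ep a"
    using ax_antipoder[OF a] .
  have "cvd a b ?g ?h (mu a b) Rab
    = mu ?g ?h \<odot> W [] (mu a b) [?h] \<odot> W [a,b] (mu ?bi ?ai) [] \<odot> W [a,b] (an b) [?ai] \<odot> W [a,b,b] (an a) [] \<odot> W [a,b] (br [a] [b]) [] \<odot> W [a] (br [a] [b]) [b] \<odot> W [] (dl a) [b,b] \<odot> W [a] (dl b) []"
    unfolding cvd_def dXd_def by (simp only: ws cc_assoc append.simps)
  also have "\<dots> = mu a ?ai \<odot> W [a] (mu (gid G ?q) ?ai) [] \<odot> W [a] (mu b ?bi) [?ai] \<odot> W [a,b] (an b) [?ai] \<odot> W [a] (br [?ai] [b,b]) [] \<odot> W [a] (an a) [b,b] \<odot> W [a,a] (dl b) [] \<odot> W [] (dl a) [b]"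
    by (simp only: cc_assoc S1[THEN ctx, simplified cc_assoc] S2[THEN ctx, simplified cc_assoc] S3[THEN ctx, simplified cc_assoc] S4)
  also have "\<dots> = mu a ?ai \<odot> W [a] (mu (gid G ?q) ?ai) [] \<odot> W [a] (mu b ?bi) [?ai] \<odot> W [a,b] (an b) [?ai] \<odot> W [a] (dl b) [?ai] \<odot> W [a] (br [?ai] [b]) [] \<odot> W [a] (an a) [b] \<odot> W [] (dl a) [b]"
    by (simp only: cc_assoc S5[THEN ctx, simplified cc_assoc] S6[THEN ctx, simplified cc_assoc])
  also have "\<dots> = mu a ?ai \<odot> W [a] (ep b) [?ai] \<odot> W [a] (br [?ai] [b]) [] \<odot> W [a] (an a) [b] \<odot> W [] (dl a) [b]"
    by (simp only: cc_assoc S7[THEN ctx, simplified cc_assoc] S8[THEN ctx, simplified cc_assoc] S9[THEN ctx, simplified cc_assoc])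
  also have "\<dots> = mu a ?ai \<odot> W [a] (an a) [] \<odot> dl a \<odot> W [a] (ep b) []"
    by (simp only: cc_assoc S10[THEN ctx, simplified cc_assoc] S11[THEN ctx, simplified cc_assoc] S12)
  also have "\<dots> = et (gsrc G a) \<odot> eXd a b"
    unfolding eXd_def by (simp only: cc_assoc S13[THEN ctx, simplified cc_assoc])
  finally show ?thesis .
qed


lemma antihom: "an (gcmp G a b) \<odot> mu a b = Rab"
proof -
  let ?g = "gcmp G a b" and ?h = "gcmp G (ginv G b) (ginv G a)"
  let ?L = "an ?g \<odot> mu a b"
  have okL: "ok ?L" "cdom ?L = [a,b]" "ccod ?L = [?h]" using a b ab by simp_all
  have okM: "ok (mu a b)" "cdom (mu a b) = [a,b]" "ccod (mu a b) = [?g]" using a b ab by simp_all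
  have okR: "ok Rab" "cdom Rab = [a,b]" "ccod Rab = [?h]" using a b ab by simp_all
  have h: "?h \<in> gAr G" "?g \<in> gAr G" using a b ab by simp_all
  have "?L = cvd a b ?h (gid G (gsrc G a)) ?L (et (gsrc G a) \<odot> eXd a b)"
    using c4r[OF a b ab okL h(1)] a b ab by simp
  also have "\<dots> = cvd a b ?h (gcmp G ?g ?h) ?L (cvd a b ?g ?h (mu a b) Rab)"
    using a b ab by (simp add: conv_ii)
  also have "\<dots> = cvd a b (gcmp G ?h ?g) ?h (cvd a b ?h ?g ?L (mu a b)) Rab"
    using c3[OF a b ab okL okM okR h(1) h(2) h(1)] a b ab by simp
  also have "\<dots> = cvd a b (gid G (gtgt G b)) ?h (et (gtgt G b) \<odot> eXd a b) Rab"
    using a b ab by (simp add: conv_i)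
  also have "\<dots> = Rab"
    using c4l[OF a b ab okR h(1)] a b ab by simp
  finally show ?thesis .
qed

end

end

context gpd begin

definition Rt where "Rt u h = mu h (ginv G u) \<odot> W [h] (an u) [] \<odot> br [u] [h]"

lemma ok_Rt[simp]: "u \<in> gAr G \<Longrightarrow> h \<in> gAr G \<Longrightarrow> gtgt G h = gtgt G u \<Longrightarrow> ok (Rt u h)"
  "u \<in> gAr G \<Longrightarrow> h \<in> gAr G \<Longrightarrow> gtgt G h = gtgt G u \<Longrightarrow> cdom (Rt u h) = [u, h]"
  "u \<in> gAr G \<Longrightarrow> h \<in> gAr G \<Longrightarrow> gtgt G h = gtgt G u \<Longrightarrow> ccod (Rt u h) = [gcmp G h (ginv G u)]"
  by (simp_all add: Rt_def)

lemma yb: assumes "set u \<subseteq> gAr G" "set v \<subseteq> gAr G" "set h \<subseteq> gAr G"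
  shows "W [] (br u h) v \<odot> br v (u @ h) = W h (br v u) [] \<odot> br (v @ u) h"
proof -
  have "W h (br v u) [] \<odot> br (v @ u) h = br (u @ v) h \<odot> W [] (br v u) h"
    using nat_l[of "br v u" h] assms by simp
  also have "\<dots> = W [] (br u h) v \<odot> W u (br v h) [] \<odot> W [] (br v u) h"
    using hex2[of u v h] assms by (simp add: cc_assoc)
  also have "\<dots> = W [] (br u h) v \<odot> br v (u @ h)"
    using hex1[of v u h] assms by (simp add: cc_assoc)
  finally show ?thesis by simp
qed

lemma Rmod: assumes u: "u \<in> gAr G" and v: "v \<in> gAr G" and h: "h \<in> gAr G"
  and vu: "gtgt G v = gsrc G u" and hu: "gtgt G h = gtgt G u"
  shows "Rt v (gcmp G h (ginv G u)) \<odot> W [v] (Rt u h) [] = Rt (gcmp G v u) h \<odot> W [] (mu v u) [h]"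
proof -
  let ?ui = "ginv G u" and ?vi = "ginv G v" and ?hu = "gcmp G h (ginv G u)"
  have A: "br [v] [?hu] \<odot> W [v] (Rt u h) [] = W [] (mu h ?ui) [v] \<odot> W [h] (an u) [v] \<odot> W [] (br [u] [h]) [v] \<odot> br [v] [u,h]"
    using nat_r[of "Rt u h" "[v]"] u v h vu hu by (simp add: Rt_def ws cc_assoc)
  have B: "W [?hu] (an v) [] \<odot> W [] (mu h ?ui) [v] = W [] (mu h ?ui) [?vi] \<odot> W [h,?ui] (an v) []"
    using W_swap[of "mu h ?ui" "an v" "[]" "[]" "[]"] u v h vu hu by simp
  have C: "mu ?hu ?vi \<odot> W [] (mu h ?ui) [?vi] = mu h (gcmp G ?ui ?vi) \<odot> W [h] (mu ?ui ?vi) []"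
    using ax_massoc[of h ?ui ?vi] u v h vu hu by simp
  have F: "W [h,?ui] (an v) [] \<odot> W [h] (an u) [v] = W [h] (an u) [?vi] \<odot> W [h,u] (an v) []"
    using W_swap[of "an u" "an v" "[h]" "[]" "[]"] u v h vu hu by simp
  have D: "br [gcmp G v u] [h] \<odot> W [] (mu v u) [h] = W [h] (mu v u) [] \<odot> br [v,u] [h]"
    using nat_l[of "mu v u" "[h]"] u v h vu hu by simp
  have E: "W [h] (an (gcmp G v u)) [] \<odot> W [h] (mu v u) [] = W [h] (mu ?ui ?vi) [] \<odot> W [h] (an u) [?vi] \<odot> W [h,u] (an v) [] \<odot> W [h] (br [v] [u]) []"
    using antihom[OF v u vu, THEN wh[where l="[h]" and r="[]"]] by (simp add: ws)
  have Y: "W [] (br [u] [h]) [v] \<odot> br [v] [u,h] = W [h] (br [v] [u]) [] \<odot> br [v,u] [h]"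
    using yb[of "[u]" "[v]" "[h]"] u v h by simp
  have "Rt v ?hu \<odot> W [v] (Rt u h) [] = mu ?hu ?vi \<odot> W [?hu] (an v) [] \<odot> br [v] [?hu] \<odot> W [v] (Rt u h) []"
    unfolding Rt_def[of v] by (simp only: cc_assoc)
  also have "\<dots> = mu ?hu ?vi \<odot> W [?hu] (an v) [] \<odot> W [] (mu h ?ui) [v] \<odot> W [h] (an u) [v] \<odot> W [] (br [u] [h]) [v] \<odot> br [v] [u,h]"
    by (simp only: A)
  also have "\<dots> = mu h (gcmp G ?ui ?vi) \<odot> W [h] (mu ?ui ?vi) [] \<odot> W [h,?ui] (an v) [] \<odot> W [h] (an u) [v] \<odot> W [] (br [u] [h]) [v] \<odot> br [v] [u,h]"
    by (simp only: cc_assoc B[THEN ctx, simplified cc_assoc] C[THEN ctx, simplified cc_assoc])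
  also have "\<dots> = mu h (gcmp G ?ui ?vi) \<odot> W [h] (mu ?ui ?vi) [] \<odot> W [h] (an u) [?vi] \<odot> W [h,u] (an v) [] \<odot> W [h] (br [v] [u]) [] \<odot> br [v,u] [h]"
    by (simp only: cc_assoc F[THEN ctx, simplified cc_assoc] Y)
  also have "\<dots> = mu h (gcmp G ?ui ?vi) \<odot> W [h] (an (gcmp G v u)) [] \<odot> W [h] (mu v u) [] \<odot> br [v,u] [h]"
    by (simp only: cc_assoc E[THEN ctx, simplified cc_assoc, symmetric])
  also have "\<dots> = mu h (gcmp G ?ui ?vi) \<odot> W [h] (an (gcmp G v u)) [] \<odot> br [gcmp G v u] [h] \<odot> W [] (mu v u) [h]"
    by (simp only: D)
  also have "\<dots> = Rt (gcmp G v u) h \<odot> W [] (mu v u) [h]"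
    unfolding Rt_def using u v h vu hu by (simp add: cc_assoc)
  finally show ?thesis .
qed

lemma CLR: assumes a: "a \<in> gAr G" and k: "k \<in> gAr G" and v: "v \<in> gAr G"
  and ak: "gtgt G a = gsrc G k" and kv: "gtgt G k = gtgt G v"
  shows "Rt v (gcmp G a k) \<odot> W [v] (mu a k) [] = mu a (gcmp G k (ginv G v)) \<odot> W [a] (Rt v k) [] \<odot> W [] (br [v] [a]) [k]"
proof -
  let ?vi = "ginv G v" and ?ak = "gcmp G a k"
  have A: "br [v] [?ak] \<odot> W [v] (mu a k) [] = W [] (mu a k) [v] \<odot> br [v] [a,k]"
    using nat_r[of "mu a k" "[v]"] a k v ak kv by simp
  have B: "W [?ak] (an v) [] \<odot> W [] (mu a k) [v] = W [] (mu a k) [?vi] \<odot> W [a,k] (an v) []"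
    using W_swap[of "mu a k" "an v" "[]" "[]" "[]"] a k v ak kv by simp
  have C: "mu ?ak ?vi \<odot> W [] (mu a k) [?vi] = mu a (gcmp G k ?vi) \<odot> W [a] (mu k ?vi) []"
    using ax_massoc[of a k ?vi] a k v ak kv by simp
  have D: "br [v] [a,k] = W [a] (br [v] [k]) [] \<odot> W [] (br [v] [a]) [k]"
    using hex1[of "[v]" "[a]" "[k]"] a k v by simp
  have "Rt v ?ak \<odot> W [v] (mu a k) [] = mu ?ak ?vi \<odot> W [?ak] (an v) [] \<odot> br [v] [?ak] \<odot> W [v] (mu a k) []"
    unfolding Rt_def by (simp only: cc_assoc)
  also have "\<dots> = mu ?ak ?vi \<odot> W [?ak] (an v) [] \<odot> W [] (mu a k) [v] \<odot> br [v] [a,k]"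
    by (simp only: A)
  also have "\<dots> = mu a (gcmp G k ?vi) \<odot> W [a] (mu k ?vi) [] \<odot> W [a,k] (an v) [] \<odot> br [v] [a,k]"
    by (simp only: cc_assoc B[THEN ctx, simplified cc_assoc] C[THEN ctx, simplified cc_assoc])
  also have "\<dots> = mu a (gcmp G k (ginv G v)) \<odot> W [a] (Rt v k) [] \<odot> W [] (br [v] [a]) [k]"
    unfolding Rt_def D by (simp only: ws cc_assoc append.simps append_Nil2)
  finally show ?thesis .
qed

lemma GCA: assumes u: "u \<in> gAr G" and v: "v \<in> gAr G" and vu: "gtgt G v = gsrc G u"
  and Q1: "ok Q1" "cdom Q1 = u # Ya" "ccod Q1 = Ma"
  and P1: "ok P1" "cdom P1 = u # Ma" "ccod P1 = Yb"
  and Q2: "ok Q2" "cdom Q2 = v # Yb" "ccod Q2 = Mb"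
  and P2: "ok P2" "cdom P2 = v # Mb" "ccod P2 = Yc"
  and Q3: "ok Q3" "cdom Q3 = gcmp G v u # Ya" "ccod Q3 = Mc"
  and P3: "ok P3" "cdom P3 = gcmp G v u # Mc" "ccod P3 = Yc"
  and Q': "ok Q'" "cdom Q' = v # Ma" "ccod Q' = Mc"
  and P': "ok P'" "cdom P' = u # Mc" "ccod P' = Mb"
  and HC: "Q2 \<odot> W [v] P1 [] = P' \<odot> W [u] Q' [] \<odot> W [] (br [v] [u]) Ma"
  and HMQ: "Q' \<odot> W [v] Q1 [] = Q3 \<odot> W [] (mu v u) Ya"
  and HMP: "P2 \<odot> W [v] P' [] = P3 \<odot> W [] (mu v u) Mc"
  shows "(P2 \<odot> W [v] Q2 [] \<odot> W [] (dl v) Yb) \<odot> W [v] (P1 \<odot> W [u] Q1 [] \<odot> W [] (dl u) Ya) []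
       = (P3 \<odot> W [gcmp G v u] Q3 [] \<odot> W [] (dl (gcmp G v u)) Ya) \<odot> W [] (mu v u) Ya"
proof -
  have sY1: "set Ya \<subseteq> gAr G" "set Ma \<subseteq> gAr G" "set Mc \<subseteq> gAr G" "set Yb \<subseteq> gAr G"
    using cdom_ar[OF Q1(1)] ccod_ar[OF Q1(1)] ccod_ar[OF Q3(1)] ccod_ar[OF P1(1)] Q1 Q3 P1 by auto
  have G1: "W [] (dl v) Yb \<odot> W [v] P1 [] = W [v,v] P1 [] \<odot> W [] (dl v) (u # Ma)"
    using W_swap[of "dl v" P1 "[]" "[]" "[]"] v P1 by simp
  have G2: "W [v] Q2 [] \<odot> W [v,v] P1 [] = W [v] P' [] \<odot> W [v,u] Q' [] \<odot> W [v] (br [v] [u]) Ma"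
    using HC[THEN wh[where l="[v]" and r="[]"]] by (simp add: ws)
  have G3: "W [] (dl v) (u # Ma) \<odot> W [v,u] Q1 [] = W [v,v,u] Q1 [] \<odot> W [] (dl v) (u # u # Ya)"
    using W_swap[of "dl v" Q1 "[]" "[u]" "[]"] v Q1 by simp
  have G4: "W [v] (br [v] [u]) Ma \<odot> W [v,v,u] Q1 [] = W [v,u,v] Q1 [] \<odot> W [v] (br [v] [u]) (u # Ya)"
    using W_swap[of "br [v] [u]" Q1 "[v]" "[]" "[]"] u v Q1 by simp
  have G5: "W [v,u] Q' [] \<odot> W [v,u,v] Q1 [] = W [v,u] Q3 [] \<odot> W [v,u] (mu v u) Ya"
    using HMQ[THEN wh[where l="[v,u]" and r="[]"]] by (simp add: ws)
  have G7: "W [] (mu v u) Mc \<odot> W [v,u] Q3 [] = W [gcmp G v u] Q3 [] \<odot> W [] (mu v u) (gcmp G v u # Ya)"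
    using W_swap[of "mu v u" Q3 "[]" "[]" "[]"] u v vu Q3 by simp
  have G8: "W [] (mu v u) (gcmp G v u # Ya) \<odot> W [v,u] (mu v u) Ya \<odot> W [v] (br [v] [u]) (u # Ya) \<odot> W [] (dl v) (u # u # Ya) \<odot> W [v] (dl u) Ya
     = W [] (dl (gcmp G v u)) Ya \<odot> W [] (mu v u) Ya"
    using ax_bialg[OF v u vu, THEN wh[where l="[]" and r="Ya"]] by (simp add: ws)
  have "(P2 \<odot> W [v] Q2 [] \<odot> W [] (dl v) Yb) \<odot> W [v] (P1 \<odot> W [u] Q1 [] \<odot> W [] (dl u) Ya) []
     = P2 \<odot> W [v] Q2 [] \<odot> W [] (dl v) Yb \<odot> W [v] P1 [] \<odot> W [v,u] Q1 [] \<odot> W [v] (dl u) Ya"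
    by (simp only: ws cc_assoc append.simps append_Nil2)
  also have "\<dots> = P2 \<odot> W [v] P' [] \<odot> W [v,u] Q' [] \<odot> W [v] (br [v] [u]) Ma \<odot> W [] (dl v) (u # Ma) \<odot> W [v,u] Q1 [] \<odot> W [v] (dl u) Ya"
    by (simp only: cc_assoc G1[THEN ctx, simplified cc_assoc] G2[THEN ctx, simplified cc_assoc])
  also have "\<dots> = P2 \<odot> W [v] P' [] \<odot> W [v,u] Q' [] \<odot> W [v,u,v] Q1 [] \<odot> W [v] (br [v] [u]) (u # Ya) \<odot> W [] (dl v) (u # u # Ya) \<odot> W [v] (dl u) Ya"
    by (simp only: cc_assoc G3[THEN ctx, simplified cc_assoc] G4[THEN ctx, simplified cc_assoc])
  also have "\<dots> = P3 \<odot> W [] (mu v u) Mc \<odot> W [v,u] Q3 [] \<odot> W [v,u] (mu v u) Ya \<odot> W [v] (br [v] [u]) (u # Ya) \<odot> W [] (dl v) (u # u # Ya) \<odot> W [v] (dl u) Ya"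
    by (simp only: cc_assoc G5[THEN ctx, simplified cc_assoc] HMP[THEN ctx, simplified cc_assoc])
  also have "\<dots> = P3 \<odot> W [gcmp G v u] Q3 [] \<odot> W [] (dl (gcmp G v u)) Ya \<odot> W [] (mu v u) Ya"
    by (simp only: cc_assoc G7[THEN ctx, simplified cc_assoc] G8)
  finally show ?thesis by (simp only: cc_assoc)
qed

end

context gpd begin

lemma Z1mod: assumes u: "u \<in> gAr G" and v: "v \<in> gAr G" and h: "h \<in> gAr G" and vu: "gtgt G v = gsrc G u"
  shows "W [] (ep v) [h] \<odot> W [v] (W [] (ep u) [h]) [] = W [] (ep (gcmp G v u)) [h] \<odot> W [] (mu v u) [h]"
proof -
  have "W [] (ep (gcmp G v u)) [h] \<odot> W [] (mu v u) [h] = W [] (ep v \<odot> W [v] (ep u) []) [h]"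
    using ax_counit_mult[OF v u vu] by (simp only: ws flip: W_cc)
  then show ?thesis by (simp add: ws)
qed

lemma Z2mod: assumes u: "u \<in> gAr G" and v: "v \<in> gAr G" and h: "h \<in> gAr G" and vu: "gtgt G v = gsrc G u"
  and uh: "gtgt G u = gsrc G h"
  shows "mu v (gcmp G u h) \<odot> W [v] (mu u h) [] = mu (gcmp G v u) h \<odot> W [] (mu v u) [h]"
  using ax_massoc[OF v u h vu uh] by simp

lemma Z4mod: assumes u: "u \<in> gAr G" and v: "v \<in> gAr G" and h: "h \<in> gAr G" and vu: "gtgt G v = gsrc G u"
  and hs: "gsrc G h = gtgt G u" and ht: "gtgt G h = gtgt G u"
  and hu: "hu = gcmp G h (ginv G u)" and hy: "hy = gcmp G u hu" and w: "w = gcmp G v u"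
  and huv: "huv = gcmp G hu (ginv G v)" and hyv: "hyv = gcmp G hy (ginv G v)"
  shows "(mu v hyv \<odot> W [v] (Rt v hy) [] \<odot> W [] (dl v) [hy]) \<odot> W [v] (mu u hu \<odot> W [u] (Rt u h) [] \<odot> W [] (dl u) [h]) []
       = (mu w huv \<odot> W [w] (Rt w h) [] \<odot> W [] (dl w) [h]) \<odot> W [] (mu v u) [h]"
proof -
  have hw: "gcmp G h (ginv G w) = huv" using u v h vu hs ht hu w huv by simp
  have hyv2: "gcmp G u huv = hyv" using u v h vu hs ht hu hy huv hyv by simp
  have ar: "hu \<in> gAr G" "hy \<in> gAr G" "w \<in> gAr G" "huv \<in> gAr G" "hyv \<in> gAr G"
    using u v h vu hs ht hu hy w huv hyv by simp_all
  have HC: "Rt v hy \<odot> W [v] (mu u hu) [] = mu u huv \<odot> W [u] (Rt v hu) [] \<odot> W [] (br [v] [u]) [hu]"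
  proof -
    have ak: "gtgt G u = gsrc G hu" "gtgt G hu = gtgt G v" using u v h vu hs ht hu by simp_all
    show ?thesis using CLR[OF u ar(1) v ak(1) ak(2), folded hy huv] .
  qed
  have HMQ: "Rt v hu \<odot> W [v] (Rt u h) [] = Rt w h \<odot> W [] (mu v u) [h]"
    using Rmod[OF u v h vu ht] by (simp only: hu[symmetric] w[symmetric])
  have HMP: "mu v hyv \<odot> W [v] (mu u huv) [] = mu w huv \<odot> W [] (mu v u) [huv]"
  proof -
    have c: "gtgt G u = gsrc G huv" using u v h vu hs ht hu huv by simp
    show ?thesis using ax_massoc[OF v u ar(4) vu c, folded w, unfolded hyv2] by simp
  qed
  have G: "(mu v hyv \<odot> W [v] (Rt v hy) [] \<odot> W [] (dl v) [hy]) \<odot> W [v] (mu u hu \<odot> W [u] (Rt u h) [] \<odot> W [] (dl u) [h]) []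
       = (mu w huv \<odot> W [gcmp G v u] (Rt w h) [] \<odot> W [] (dl (gcmp G v u)) [h]) \<odot> W [] (mu v u) [h]"
    apply (rule GCA[OF u v vu])
    prefer 25 apply (rule HC)
    prefer 25 apply (rule HMQ)
    prefer 25 apply (rule HMP)
    apply (use u v h vu hs ht hu hy w huv hyv in simp_all)
    done
  then show ?thesis by (simp only: w[symmetric])
qed

end

context gpd begin

lemma TSTEP: assumes u: "u \<in> gAr G" and v: "v \<in> gAr G" and vu: "gtgt G v = gsrc G u" and w: "w = gcmp G v u"
  and sB: "set Bx \<subseteq> gAr G" "set By \<subseteq> gAr G" "set Bz \<subseteq> gAr G"
  and sg: "gx \<in> gAr G" "gy \<in> gAr G" "gz \<in> gAr G"
  and Bxy: "ok ZBxy" "cdom ZBxy = u # Bx" "ccod ZBxy = By"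
  and Byz: "ok ZByz" "cdom ZByz = v # By" "ccod ZByz = Bz"
  and Bxz: "ok ZBxz" "cdom ZBxz = w # Bx" "ccod ZBxz = Bz"
  and gxy: "ok Zgxy" "cdom Zgxy = [u, gx]" "ccod Zgxy = [gy]"
  and gyz: "ok Zgyz" "cdom Zgyz = [v, gy]" "ccod Zgyz = [gz]"
  and gxz: "ok Zgxz" "cdom Zgxz = [w, gx]" "ccod Zgxz = [gz]"
  and IHB: "ZByz \<odot> W [v] ZBxy [] = ZBxz \<odot> W [] (mu v u) Bx"
  and IHg: "Zgyz \<odot> W [v] Zgxy [] = Zgxz \<odot> W [] (mu v u) [gx]"
  shows "((ZByz \<otimes> Zgyz) \<odot> W [v] (br [v] By) [gy] \<odot> W [] (dl v) (By @ [gy]))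
           \<odot> W [v] ((ZBxy \<otimes> Zgxy) \<odot> W [u] (br [u] Bx) [gx] \<odot> W [] (dl u) (Bx @ [gx])) []
       = ((ZBxz \<otimes> Zgxz) \<odot> W [w] (br [w] Bx) [gx] \<odot> W [] (dl w) (Bx @ [gx])) \<odot> W [] (mu v u) (Bx @ [gx])"
proof -
  have war: "w \<in> gAr G" using u v vu w by simp
  have e1: "W [] (br [v] By) [gy] \<odot> W [v] ZBxy [gy] = W [] ZBxy [v, gy] \<odot> W [] (br [v] (u # Bx)) [gy]"
  proof -
    have "br [v] By \<odot> W [v] ZBxy [] = W [] ZBxy [v] \<odot> br [v] (u # Bx)"
      using nat_r[of ZBxy "[v]"] Bxy v by simp
    from this[THEN wh[where l="[]" and r="[gy]"]] show ?thesis by (simp add: ws)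
  qed
  have e2: "W By Zgyz [] \<odot> W [] ZBxy [v, gy] = W [] ZBxy [gz] \<odot> W (u # Bx) Zgyz []"
    using W_swap[of ZBxy Zgyz "[]" "[]" "[]"] Bxy gyz by simp
  have e3: "W [] (br [v] (u # Bx)) [gy] = W [u] (br [v] Bx) [gy] \<odot> W [] (br [v] [u]) (Bx @ [gy])"
    using hex1[of "[v]" "[u]" Bx, THEN wh[where l="[]" and r="[gy]"]] u v sB by (simp add: ws)
  have HC: "(W By Zgyz [] \<odot> W [] (br [v] By) [gy]) \<odot> W [v] (W [] ZBxy [gy]) []
          = W [] ZBxy [gz] \<odot> W [u] (W Bx Zgyz [] \<odot> W [] (br [v] Bx) [gy]) [] \<odot> W [] (br [v] [u]) (Bx @ [gy])"
  proof -
    have "(W By Zgyz [] \<odot> W [] (br [v] By) [gy]) \<odot> W [v] (W [] ZBxy [gy]) []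
        = W By Zgyz [] \<odot> W [] (br [v] By) [gy] \<odot> W [v] ZBxy [gy]"
      by (simp only: ws cc_assoc append.simps append_Nil2)
    also have "\<dots> = W [] ZBxy [gz] \<odot> W (u # Bx) Zgyz [] \<odot> W [u] (br [v] Bx) [gy] \<odot> W [] (br [v] [u]) (Bx @ [gy])"
      by (simp only: cc_assoc e1 e2[THEN ctx, simplified cc_assoc] e3)
    also have "\<dots> = W [] ZBxy [gz] \<odot> W [u] (W Bx Zgyz [] \<odot> W [] (br [v] Bx) [gy]) [] \<odot> W [] (br [v] [u]) (Bx @ [gy])"
      by (simp only: ws cc_assoc append.simps append_Nil2)
    finally show ?thesis .
  qed
  have f1: "W [] (br [v] Bx) [gy] \<odot> W (v # Bx) Zgxy [] = W (Bx @ [v]) Zgxy [] \<odot> W [] (br [v] Bx) [u, gx]"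
    using W_swap[of "br [v] Bx" Zgxy "[]" "[]" "[]"] gxy v sB by simp
  have f2: "W Bx Zgyz [] \<odot> W (Bx @ [v]) Zgxy [] = W Bx Zgxz [] \<odot> W Bx (mu v u) [gx]"
    using IHg[THEN wh[where l="Bx" and r="[]"]] by (simp add: ws)
  have f3: "W [] (br [v] Bx) [u, gx] \<odot> W [v] (br [u] Bx) [gx] = W [] (br [v,u] Bx) [gx]"
    using hex2[of "[v]" "[u]" Bx, THEN wh[where l="[]" and r="[gx]"]] u v sB by (simp add: ws)
  have f4: "W Bx (mu v u) [gx] \<odot> W [] (br [v,u] Bx) [gx] = W [] (br [w] Bx) [gx] \<odot> W [] (mu v u) (Bx @ [gx])"
  proof -
    have "br [gcmp G v u] Bx \<odot> W [] (mu v u) Bx = W Bx (mu v u) [] \<odot> br [v,u] Bx"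
      using nat_l[of "mu v u" Bx] u v vu sB by simp
    from this[symmetric, THEN wh[where l="[]" and r="[gx]"]] show ?thesis by (simp add: ws w)
  qed
  have HMQ: "(W Bx Zgyz [] \<odot> W [] (br [v] Bx) [gy]) \<odot> W [v] (W Bx Zgxy [] \<odot> W [] (br [u] Bx) [gx]) []
      = (W Bx Zgxz [] \<odot> W [] (br [w] Bx) [gx]) \<odot> W [] (mu v u) (Bx @ [gx])"
  proof -
    have "(W Bx Zgyz [] \<odot> W [] (br [v] Bx) [gy]) \<odot> W [v] (W Bx Zgxy [] \<odot> W [] (br [u] Bx) [gx]) []
        = W Bx Zgyz [] \<odot> W [] (br [v] Bx) [gy] \<odot> W (v # Bx) Zgxy [] \<odot> W [v] (br [u] Bx) [gx]"
      by (simp only: ws cc_assoc append.simps append_Nil2)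
    also have "\<dots> = W Bx Zgxz [] \<odot> W Bx (mu v u) [gx] \<odot> W [] (br [v] Bx) [u, gx] \<odot> W [v] (br [u] Bx) [gx]"
      by (simp only: cc_assoc f1[THEN ctx, simplified cc_assoc] f2[THEN ctx, simplified cc_assoc])
    also have "\<dots> = W Bx Zgxz [] \<odot> W [] (br [w] Bx) [gx] \<odot> W [] (mu v u) (Bx @ [gx])"
      by (simp only: cc_assoc f3 f4)
    finally show ?thesis by (simp only: cc_assoc)
  qed
  have HMP: "W [] ZByz [gz] \<odot> W [v] (W [] ZBxy [gz]) [] = W [] ZBxz [gz] \<odot> W [] (mu v u) (Bx @ [gz])"
    using IHB[THEN wh[where l="[]" and r="[gz]"]] by (simp add: ws)
  have split: "ZBxy \<otimes> Zgxy = W [] ZBxy [gy] \<odot> W (u # Bx) Zgxy []"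
     "ZByz \<otimes> Zgyz = W [] ZByz [gz] \<odot> W (v # By) Zgyz []"
     "ZBxz \<otimes> Zgxz = W [] ZBxz [gz] \<odot> W (w # Bx) Zgxz []"
    using ct_split1[OF Bxy(1) gxy(1)] ct_split1[OF Byz(1) gyz(1)] ct_split1[OF Bxz(1) gxz(1)] Bxy Byz Bxz gxy gyz gxz
    by simp_all
  have G: "(W [] ZByz [gz] \<odot> W [v] (W By Zgyz [] \<odot> W [] (br [v] By) [gy]) [] \<odot> W [] (dl v) (By @ [gy]))
           \<odot> W [v] (W [] ZBxy [gy] \<odot> W [u] (W Bx Zgxy [] \<odot> W [] (br [u] Bx) [gx]) [] \<odot> W [] (dl u) (Bx @ [gx])) []
       = (W [] ZBxz [gz] \<odot> W [gcmp G v u] (W Bx Zgxz [] \<odot> W [] (br [w] Bx) [gx]) [] \<odot> W [] (dl (gcmp G v u)) (Bx @ [gx]))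
           \<odot> W [] (mu v u) (Bx @ [gx])"
    apply (rule GCA[OF u v vu])
    prefer 25 apply (rule HC)
    prefer 25 apply (rule HMQ)
    prefer 25 apply (rule HMP)
    apply (use u v vu w sB sg Bxy Byz Bxz gxy gyz gxz war in simp_all)
    done
  show ?thesis unfolding split using G by (simp only: ws cc_assoc append.simps append_Nil2 w[symmetric])
qed

end

context gpd begin

lemma gconj_cases:
  assumes x: "x \<in> gAr G" and g: "g \<in> gAr G"
  shows "gsrc G g \<noteq> gtgt G x \<Longrightarrow> gtgt G g \<noteq> gtgt G x \<Longrightarrow> gconj G x g = g"
    "gsrc G g = gtgt G x \<Longrightarrow> gtgt G g \<noteq> gtgt G x \<Longrightarrow> gconj G x g = gcmp G x g"
    "gsrc G g \<noteq> gtgt G x \<Longrightarrow> gtgt G g = gtgt G x \<Longrightarrow> gconj G x g = gcmp G g (ginv G x)"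
    "gsrc G g = gtgt G x \<Longrightarrow> gtgt G g = gtgt G x \<Longrightarrow> gconj G x g = gcmp G x (gcmp G g (ginv G x))"
  using x g by (auto simp: gconj_def Let_def)

lemma gconj_ar[simp]: "x \<in> gAr G \<Longrightarrow> g \<in> gAr G \<Longrightarrow> gconj G x g \<in> gAr G"
  by (cases "gsrc G g = gtgt G x"; cases "gtgt G g = gtgt G x") (simp_all add: gconj_cases)

lemma gconj_src: "x \<in> gAr G \<Longrightarrow> g \<in> gAr G \<Longrightarrow> gsrc G (gconj G x g) = (if gsrc G g = gtgt G x then gsrc G x else gsrc G g)"
  by (cases "gsrc G g = gtgt G x"; cases "gtgt G g = gtgt G x") (simp_all add: gconj_cases)
lemma gconj_tgt: "x \<in> gAr G \<Longrightarrow> g \<in> gAr G \<Longrightarrow> gtgt G (gconj G x g) = (if gtgt G g = gtgt G x then gsrc G x else gtgt G g)"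
  by (cases "gsrc G g = gtgt G x"; cases "gtgt G g = gtgt G x") (simp_all add: gconj_cases)

lemma wconj_ar: "x \<in> gAr G \<Longrightarrow> set A \<subseteq> gAr G \<Longrightarrow> set (wconj G x A) \<subseteq> gAr G"
  by (auto simp: wconj_def)

context
  fixes x y g assumes x: "x \<in> gAr G" and y: "y \<in> gAr G" and g: "g \<in> gAr G" and xy: "gtgt G y = gtgt G x"
begin

lemma zc1: "gsrc G g \<noteq> gtgt G x \<Longrightarrow> gtgt G g \<noteq> gtgt G x \<Longrightarrow>
   cl (zeta1 G x y g) = W [] (ep (gcmp G y (ginv G x))) [gconj G x g]"
  unfolding zeta1_def Let_def by (simp add: cl_Tens ct_Ir)

lemma zc2: "gsrc G g = gtgt G x \<Longrightarrow> gtgt G g \<noteq> gtgt G x \<Longrightarrow>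
   cl (zeta1 G x y g) = mu (gcmp G y (ginv G x)) (gconj G x g)"
  unfolding zeta1_def Let_def by simp

lemma zc3: "gsrc G g \<noteq> gtgt G x \<Longrightarrow> gtgt G g = gtgt G x \<Longrightarrow>
   cl (zeta1 G x y g) = Rt (gcmp G y (ginv G x)) (gconj G x g)"
proof -
  assume a: "gsrc G g \<noteq> gtgt G x" "gtgt G g = gtgt G x"
  have v: "gcmp G x (ginv G y) = ginv G (gcmp G y (ginv G x))" using x y xy by simp
  have "zeta1 G x y g = Comp (Mu (gconj G x g) (gcmp G x (ginv G y))) (Comp (Tens (Id [gconj G x g]) (An (gcmp G y (ginv G x)))) (Br [gcmp G y (ginv G x)] [gconj G x g]))"
    unfolding zeta1_def Let_def using a by simp
  then show ?thesis unfolding Rt_def v by (simp only: cl_Comp cl_Tens Il_ct U_simps)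
qed

lemma zc4: "gsrc G g = gtgt G x \<Longrightarrow> gtgt G g = gtgt G x \<Longrightarrow>
   cl (zeta1 G x y g) = mu (gcmp G y (ginv G x)) (gcmp G (gconj G x g) (ginv G (gcmp G y (ginv G x))))
     \<odot> W [gcmp G y (ginv G x)] (Rt (gcmp G y (ginv G x)) (gconj G x g)) [] \<odot> W [] (dl (gcmp G y (ginv G x))) [gconj G x g]"
proof -
  assume a: "gsrc G g = gtgt G x" "gtgt G g = gtgt G x"
  have v: "gcmp G x (ginv G y) = ginv G (gcmp G y (ginv G x))" using x y xy by simp
  let ?u = "gcmp G y (ginv G x)" and ?h = "gconj G x g" and ?w = "ginv G (gcmp G y (ginv G x))"
  have "zeta1 G x y g = Comp (Mu ?u (gcmp G ?h ?w))
        (Comp (Tens (Id [?u]) (Mu ?h ?w))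
         (Comp (Tens (Id [?u]) (Comp (Tens (Id [?h]) (An ?u)) (Br [?u] [?h])))
               (Tens (Dl ?u) (Id [?h]))))"
    unfolding zeta1_def Let_def v using a by simp
  then show ?thesis unfolding Rt_def by (simp only: cl_Comp cl_Tens Il_ct ct_Ir U_simps ws cc_assoc)
qed

lemma ztype1: "ok (cl (zeta1 G x y g)) \<and> cdom (cl (zeta1 G x y g)) = [gcmp G y (ginv G x), gconj G x g]
   \<and> ccod (cl (zeta1 G x y g)) = [gconj G y g]"
proof (cases "gsrc G g = gtgt G x"; cases "gtgt G g = gtgt G x")
  assume "gsrc G g = gtgt G x" "gtgt G g = gtgt G x"
  then show ?thesis using zc4 x y g xy by (simp add: gconj_cases)
next
  assume "gsrc G g = gtgt G x" "gtgt G g \<noteq> gtgt G x"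
  then show ?thesis using zc2 x y g xy by (simp add: gconj_cases)
next
  assume "gsrc G g \<noteq> gtgt G x" "gtgt G g = gtgt G x"
  then show ?thesis using zc3 x y g xy by (simp add: gconj_cases)
next
  assume "gsrc G g \<noteq> gtgt G x" "gtgt G g \<noteq> gtgt G x"
  then show ?thesis using zc1 x y g xy by (simp add: gconj_cases)
qed

end


end

context gpd begin

lemma Z1mod': "u \<in> gAr G \<Longrightarrow> v \<in> gAr G \<Longrightarrow> h \<in> gAr G \<Longrightarrow> gtgt G v = gsrc G u \<Longrightarrow> hy = h \<Longrightarrow> w = gcmp G v u \<Longrightarrow>
  W [] (ep v) [hy] \<odot> W [v] (W [] (ep u) [h]) [] = W [] (ep w) [h] \<odot> W [] (mu v u) [h]"
  using Z1mod by blast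
lemma Z2mod': "u \<in> gAr G \<Longrightarrow> v \<in> gAr G \<Longrightarrow> h \<in> gAr G \<Longrightarrow> gtgt G v = gsrc G u \<Longrightarrow> gtgt G u = gsrc G h \<Longrightarrow>
  hy = gcmp G u h \<Longrightarrow> w = gcmp G v u \<Longrightarrow>
  mu v hy \<odot> W [v] (mu u h) [] = mu w h \<odot> W [] (mu v u) [h]"
  using Z2mod by blast
lemma Z3mod': "u \<in> gAr G \<Longrightarrow> v \<in> gAr G \<Longrightarrow> h \<in> gAr G \<Longrightarrow> gtgt G v = gsrc G u \<Longrightarrow> gtgt G h = gtgt G u \<Longrightarrow>
  hu = gcmp G h (ginv G u) \<Longrightarrow> w = gcmp G v u \<Longrightarrow>
  Rt v hu \<odot> W [v] (Rt u h) [] = Rt w h \<odot> W [] (mu v u) [h]"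
  using Rmod by blast

lemma Zmod1: assumes x: "x \<in> gAr G" and y: "y \<in> gAr G" and z: "z \<in> gAr G" and g: "g \<in> gAr G"
  and xy: "gtgt G y = gtgt G x" and xz: "gtgt G z = gtgt G x"
  shows "cl (zeta1 G y z g) \<odot> W [gcmp G z (ginv G y)] (cl (zeta1 G x y g)) []
       = cl (zeta1 G x z g) \<odot> W [] (mu (gcmp G z (ginv G y)) (gcmp G y (ginv G x))) [gconj G x g]"
proof -
  have yz: "gtgt G z = gtgt G y" using xy xz by simp
  show ?thesis
  proof (cases "gsrc G g = gtgt G x"; cases "gtgt G g = gtgt G x")
    assume a: "gsrc G g = gtgt G x" "gtgt G g = gtgt G x"
    show ?thesis
      unfolding zc4[OF x y g xy a] zc4[OF y z g yz a[unfolded xy[symmetric]]] zc4[OF x z g xz a]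
      by (rule Z4mod) (use x y z g xy xz a in \<open>simp_all add: gconj_cases\<close>)
  next
    assume a: "gsrc G g = gtgt G x" "gtgt G g \<noteq> gtgt G x"
    show ?thesis
      unfolding zc2[OF x y g xy a] zc2[OF y z g yz a[unfolded xy[symmetric]]] zc2[OF x z g xz a]
      by (rule Z2mod') (use x y z g xy xz a in \<open>simp_all add: gconj_cases\<close>)
  next
    assume a: "gsrc G g \<noteq> gtgt G x" "gtgt G g = gtgt G x"
    show ?thesis
      unfolding zc3[OF x y g xy a] zc3[OF y z g yz a[unfolded xy[symmetric]]] zc3[OF x z g xz a]
      by (rule Z3mod') (use x y z g xy xz a in \<open>simp_all add: gconj_cases\<close>)
  next
    assume a: "gsrc G g \<noteq> gtgt G x" "gtgt G g \<noteq> gtgt G x"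
    show ?thesis
      unfolding zc1[OF x y g xy a] zc1[OF y z g yz a[unfolded xy[symmetric]]] zc1[OF x z g xz a]
      by (rule Z1mod') (use x y z g xy xz a in \<open>simp_all add: gconj_cases\<close>)
  qed
qed

lemma wconj_snoc: "wconj G x (rev (g # ra)) = wconj G x (rev ra) @ [gconj G x g]"
  by (simp add: wconj_def)

lemma zR3: "cl (zetaR G x y (g # h # ra)) =
   (cl (zetaR G x y (h # ra)) \<otimes> cl (zeta1 G x y g)) \<odot> W [gcmp G y (ginv G x)] (br [gcmp G y (ginv G x)] (wconj G x (rev (h # ra)))) [gconj G x g]
    \<odot> W [] (dl (gcmp G y (ginv G x))) (wconj G x (rev (h # ra)) @ [gconj G x g])"
proof -
  have e1: "(I [gcmp G y (ginv G x)] \<otimes> br [gcmp G y (ginv G x)] (wconj G x (rev (h # ra)))) \<otimes> I [gconj G x g]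
     = W [gcmp G y (ginv G x)] (br [gcmp G y (ginv G x)] (wconj G x (rev (h # ra)))) [gconj G x g]"
    by (simp only: W_def ct_assoc)
  have e2: "dl (gcmp G y (ginv G x)) \<otimes> I (wconj G x (rev (h # ra)) @ [gconj G x g])
     = W [] (dl (gcmp G y (ginv G x))) (wconj G x (rev (h # ra)) @ [gconj G x g])"
    by (simp only: ct_Ir U_simps)
  show ?thesis by (simp only: zetaR.simps Let_def cl_Comp cl_Tens e1 e2)
qed

lemma ztype: assumes x: "x \<in> gAr G" and y: "y \<in> gAr G" and xy: "gtgt G y = gtgt G x"
  shows "set ra \<subseteq> gAr G \<Longrightarrow> ok (cl (zetaR G x y ra)) \<and> cdom (cl (zetaR G x y ra)) = gcmp G y (ginv G x) # wconj G x (rev ra)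
   \<and> ccod (cl (zetaR G x y ra)) = wconj G y (rev ra)"
proof (induction ra rule: induct_list012)
  case 1
  then show ?case using x y xy by (simp add: wconj_def)
next
  case (2 g)
  then show ?case using ztype1[OF x y _ xy, of g] by (simp add: wconj_def)
next
  case (3 g h ra)
  have IH: "ok (cl (zetaR G x y (h # ra))) \<and> cdom (cl (zetaR G x y (h # ra))) = gcmp G y (ginv G x) # wconj G x (rev (h # ra))
   \<and> ccod (cl (zetaR G x y (h # ra))) = wconj G y (rev (h # ra))" using 3 by simp
  have g1: "ok (cl (zeta1 G x y g)) \<and> cdom (cl (zeta1 G x y g)) = [gcmp G y (ginv G x), gconj G x g]
   \<and> ccod (cl (zeta1 G x y g)) = [gconj G y g]" using ztype1[OF x y _ xy, of g] 3 by simp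
  have s: "set (wconj G x (rev (h # ra))) \<subseteq> gAr G" using wconj_ar[OF x, of "rev (h # ra)"] 3 by simp
  show ?case unfolding zR3 using IH g1 s x y xy 3 by (simp add: wconj_snoc del: rev.simps)
qed


lemma Zmod: assumes x: "x \<in> gAr G" and y: "y \<in> gAr G" and z: "z \<in> gAr G"
  and xy: "gtgt G y = gtgt G x" and xz: "gtgt G z = gtgt G x"
  shows "set ra \<subseteq> gAr G \<Longrightarrow> cl (zetaR G y z ra) \<odot> W [gcmp G z (ginv G y)] (cl (zetaR G x y ra)) []
     = cl (zetaR G x z ra) \<odot> W [] (mu (gcmp G z (ginv G y)) (gcmp G y (ginv G x))) (wconj G x (rev ra))"
proof (induction ra rule: induct_list012)
  case 1
  have eq: "gcmp G (gcmp G z (ginv G y)) (gcmp G y (ginv G x)) = gcmp G z (ginv G x)" using x y z xy xz by simp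
  have ar: "gcmp G z (ginv G y) \<in> gAr G" "gcmp G y (ginv G x) \<in> gAr G" "gtgt G (gcmp G z (ginv G y)) = gsrc G (gcmp G y (ginv G x))"
    using x y z xy xz by simp_all
  have "ep (gcmp G z (ginv G x)) \<odot> mu (gcmp G z (ginv G y)) (gcmp G y (ginv G x)) = ep (gcmp G z (ginv G y)) \<odot> W [gcmp G z (ginv G y)] (ep (gcmp G y (ginv G x))) []"
    using ax_counit_mult[OF ar, unfolded eq] .
  then show ?case using ar by (simp add: wconj_def W_nil)
next
  case (2 g)
  then show ?case using Zmod1[OF x y z _ xy xz, of g] by (simp add: wconj_def)
next
  case (3 g h ra)
  have yz: "gtgt G z = gtgt G y" using xy xz by simp
  have s: "set (h # ra) \<subseteq> gAr G" "g \<in> gAr G" using 3 by auto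
  have IH: "cl (zetaR G y z (h # ra)) \<odot> W [gcmp G z (ginv G y)] (cl (zetaR G x y (h # ra))) []
     = cl (zetaR G x z (h # ra)) \<odot> W [] (mu (gcmp G z (ginv G y)) (gcmp G y (ginv G x))) (wconj G x (rev (h # ra)))"
    using 3 by simp
  note t1 = ztype[OF x y xy s(1)] and t2 = ztype[OF y z yz s(1)] and t3 = ztype[OF x z xz s(1)]
  note g1 = ztype1[OF x y s(2) xy] and g2 = ztype1[OF y z s(2) yz] and g3 = ztype1[OF x z s(2) xz]
  have sw: "set (wconj G x (rev (h # ra))) \<subseteq> gAr G" "set (wconj G y (rev (h # ra))) \<subseteq> gAr G" "set (wconj G z (rev (h # ra))) \<subseteq> gAr G"
    using wconj_ar[OF x, of "rev (h # ra)"] wconj_ar[OF y, of "rev (h # ra)"] wconj_ar[OF z, of "rev (h # ra)"] s by auto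
  show ?case
    unfolding zR3 wconj_snoc[of x g "h # ra"]
    apply (rule TSTEP)
    prefer 29 apply (rule IH)
    prefer 29 apply (rule Zmod1[OF x y z s(2) xy xz])
    apply (use x y z xy xz s sw t1 t2 t3 g1 g2 g3 in simp_all)
    done
qed

lemma zunit: assumes i: "i \<in> gOb G"
  shows "cl (zeta G (gid G i) (gid G i) [gid G i]) \<odot> W [] (et i) [gid G i] = I [gid G i]"
proof -
  let ?e = "gid G i"
  have e: "?e \<in> gAr G" using i by simp
  have v1: "gcmp G ?e (ginv G ?e) = ?e" "gconj G ?e ?e = ?e" using i by (simp_all add: gconj_def)
  have z: "cl (zeta G ?e ?e [?e]) = mu ?e ?e \<odot> W [?e] (Rt ?e ?e) [] \<odot> W [] (dl ?e) [?e]"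
    unfolding zeta_def using zc4[OF e e e HOL.refl] i by (simp add: v1)
  have d: "W [] (dl ?e) [?e] \<odot> W [] (et i) [?e] = W [?e] (et i) [?e] \<odot> W [] (et i) [?e]"
    using ax_delta_unit[OF i, THEN wh[where l="[]" and r="[?e]"]] by (simp add: ws)
  have r1: "br [?e] [?e] \<odot> W [] (et i) [?e] = W [?e] (et i) []"
    using nat_l[of "et i" "[?e]"] i by (simp add: br_nil1 idr2)
  have r2: "W [?e] (an ?e) [] \<odot> W [?e] (et i) [] = W [?e] (et i) []"
    using an_et[OF i, THEN wh[where l="[?e]" and r="[]"]] by (simp add: ws)
  have r3: "mu ?e ?e \<odot> W [?e] (et i) [] = I [?e]"
    using ax_unitr[OF e] i by simp
  have r: "Rt ?e ?e \<odot> W [] (et i) [?e] = I [?e]"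
  proof -
    have "Rt ?e ?e \<odot> W [] (et i) [?e] = mu ?e ?e \<odot> W [?e] (an ?e) [] \<odot> br [?e] [?e] \<odot> W [] (et i) [?e]"
      unfolding Rt_def using i by (simp add: cc_assoc)
    also have "\<dots> = I [?e]" by (simp only: r1 r2 r3)
    finally show ?thesis .
  qed
  have r': "W [?e] (Rt ?e ?e) [] \<odot> W [?e] (et i) [?e] = I [?e, ?e]"
    using r[THEN wh[where l="[?e]" and r="[]"]] by (simp add: ws)
  have u: "mu ?e ?e \<odot> W [] (et i) [?e] = I [?e]"
    using ax_unitl[OF e] i by simp
  have "cl (zeta G ?e ?e [?e]) \<odot> W [] (et i) [?e] = mu ?e ?e \<odot> W [?e] (Rt ?e ?e) [] \<odot> W [?e] (et i) [?e] \<odot> W [] (et i) [?e]"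
    unfolding z by (simp only: cc_assoc d)
  also have "\<dots> = mu ?e ?e \<odot> I [?e, ?e] \<odot> W [] (et i) [?e]"
    by (simp only: cc_assoc r'[THEN ctx, simplified cc_assoc])
  also have "\<dots> = mu ?e ?e \<odot> W [] (et i) [?e]"
    using i by (subst idl2) auto
  also have "\<dots> = I [?e]" by (rule u)
  finally show ?thesis .
qed

end

context gpd begin

lemma cl_heq: "hwf G f \<Longrightarrow> cl f = cl g \<Longrightarrow> heq G f g"
proof -
  assume "hwf G f" "cl f = cl g"
  then have "f \<in> cl g" using in_cl by blast
  then show ?thesis unfolding cl_def by (simp add: heq.sym)
qed

lemma main1: assumes x: "x \<in> gAr G" and y: "y \<in> gAr G" and z: "z \<in> gAr G"
  and xy: "gtgt G y = gtgt G x" and xz: "gtgt G z = gtgt G x" and A: "set A \<subseteq> gAr G"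
  shows "heq G (Comp (zeta G y z A) (Tens (Id [gcmp G z (ginv G y)]) (zeta G x y A)))
               (Comp (zeta G x z A) (Tens (Mu (gcmp G z (ginv G y)) (gcmp G y (ginv G x)))
                                          (Id (wconj G x A))))"
proof -
  have yz: "gtgt G z = gtgt G y" using xy xz by simp
  have sA: "set (rev A) \<subseteq> gAr G" using A by simp
  have M: "cl (zeta G y z A) \<odot> W [gcmp G z (ginv G y)] (cl (zeta G x y A)) []
     = cl (zeta G x z A) \<odot> W [] (mu (gcmp G z (ginv G y)) (gcmp G y (ginv G x))) (wconj G x A)"
    using Zmod[OF x y z xy xz sA] unfolding zeta_def by simp
  note t1 = ztype[OF x y xy sA] and t2 = ztype[OF y z yz sA]
  have ok: "ok (cl (zeta G y z A) \<odot> W [gcmp G z (ginv G y)] (cl (zeta G x y A)) [])"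
    using t1 t2 x y z xy xz unfolding zeta_def by simp
  have L: "cl (Comp (zeta G y z A) (Tens (Id [gcmp G z (ginv G y)]) (zeta G x y A)))
      = cl (zeta G y z A) \<odot> W [gcmp G z (ginv G y)] (cl (zeta G x y A)) []"
    by (simp add: cl_Comp cl_Tens Il_ct)
  have R: "cl (Comp (zeta G x z A) (Tens (Mu (gcmp G z (ginv G y)) (gcmp G y (ginv G x))) (Id (wconj G x A))))
      = cl (zeta G x z A) \<odot> W [] (mu (gcmp G z (ginv G y)) (gcmp G y (ginv G x))) (wconj G x A)"
    by (simp add: cl_Comp cl_Tens ct_Ir)
  have h: "hwf G (Comp (zeta G y z A) (Tens (Id [gcmp G z (ginv G y)]) (zeta G x y A)))"
    using ok unfolding L[symmetric] by (simp only: ok_cl)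
  show ?thesis
    by (rule cl_heq[OF h]) (simp only: L R M)
qed

lemma main2: assumes i: "i \<in> gOb G"
  shows "heq G (Comp (zeta G (gid G i) (gid G i) [gid G i]) (Tens (Et i) (Id [gid G i]))) (Id [gid G i])"
proof -
  have L: "cl (Comp (zeta G (gid G i) (gid G i) [gid G i]) (Tens (Et i) (Id [gid G i])))
      = cl (zeta G (gid G i) (gid G i) [gid G i]) \<odot> W [] (et i) [gid G i]"
    by (simp add: cl_Comp cl_Tens ct_Ir)
  have c: "cl (Comp (zeta G (gid G i) (gid G i) [gid G i]) (Tens (Et i) (Id [gid G i]))) = cl (Id [gid G i])"
    by (simp only: L zunit[OF i])
  have h: "hwf G (Comp (zeta G (gid G i) (gid G i) [gid G i]) (Tens (Et i) (Id [gid G i])))"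
  proof -
    have "ok (cl (Comp (zeta G (gid G i) (gid G i) [gid G i]) (Tens (Et i) (Id [gid G i]))))"
      unfolding c using i by simp
    then show ?thesis by (simp only: ok_cl)
  qed
  show ?thesis by (rule cl_heq[OF h c])
qed

end

theorem proposition8p3:
  fixes G :: "('o, 'a) grpd" and x y z :: 'a and A :: "'a list"
  assumes "groupoid G"
    and "x \<in> gAr G" and "y \<in> gAr G" and "z \<in> gAr G"
    and "gtgt G y = gtgt G x" and "gtgt G z = gtgt G x"
    and "set A \<subseteq> gAr G"
  shows "heq G (Comp (zeta G y z A) (Tens (Id [gcmp G z (ginv G y)]) (zeta G x y A)))
               (Comp (zeta G x z A) (Tens (Mu (gcmp G z (ginv G y)) (gcmp G y (ginv G x)))
                                          (Id (wconj G x A))))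
       \<and> (\<forall>i\<in>gOb G.
           heq G (Comp (zeta G (gid G i) (gid G i) [gid G i])
                       (Tens (Id [gid G i]) (zeta G (gid G i) (gid G i) [gid G i])))
                 (Comp (zeta G (gid G i) (gid G i) [gid G i])
                       (Tens (Mu (gid G i) (gid G i)) (Id [gid G i])))
         \<and> heq G (Comp (zeta G (gid G i) (gid G i) [gid G i]) (Tens (Et i) (Id [gid G i])))
                 (Id [gid G i]))"
proof -
  interpret gpd G by (simp add: gpd_def assms(1))
  have P1: "heq G (Comp (zeta G y z A) (Tens (Id [gcmp G z (ginv G y)]) (zeta G x y A)))
               (Comp (zeta G x z A) (Tens (Mu (gcmp G z (ginv G y)) (gcmp G y (ginv G x)))
                                          (Id (wconj G x A))))"
    using main1 assms by blast
  have P2: "heq G (Comp (zeta G (gid G i) (gid G i) [gid G i])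
                       (Tens (Id [gid G i]) (zeta G (gid G i) (gid G i) [gid G i])))
                 (Comp (zeta G (gid G i) (gid G i) [gid G i])
                       (Tens (Mu (gid G i) (gid G i)) (Id [gid G i])))" if i: "i \<in> gOb G" for i
  proof -
    have e: "gid G i \<in> gAr G" using i by simp
    have v: "gcmp G (gid G i) (ginv G (gid G i)) = gid G i" "wconj G (gid G i) [gid G i] = [gid G i]"
      using i by (simp_all add: wconj_def gconj_def)
    show ?thesis using main1[OF e e e HOL.refl HOL.refl, of "[gid G i]"] e unfolding v by simp
  qed
  show ?thesis using P1 P2 main2 by blast
qed

end
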